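(* Let $(V_1, V_2)$ be an irreducible $3$-finite pair on $\mathcal{H}$. Then: (1) $\operatorname{rank}[V_2^*, V_1] = 1$ and $\operatorname{ran}[V_2^*, V_1] = E_1$; (2) $E_{-1} = \{0\}$; (3) there exist a unique $\beta \in \mathbb{C}\setminus\{0\}$ and a unit vector $f \in E_1$ such that $E_1 = \mathbb{C} f$ and $[V_2^*, V_1] f = \beta f$; (4) there is a unique $\lambda \in (0,1)$ such that $\sigma(C(V_1, V_2)) \cap (0,1) = \{\lambda\}$, and the restriction of $C(V_1,V_2)$ to $(\ker C(V_1,V_2))^\perp$ is unitarily equivalent to the diagonal matrix $\operatorname{diag}(1, \lambda, -\lambda)$ on $\mathbb{C}^3$; (5) $|\beta| = \lambda$.
   Context: All Hilbert spaces are complex and separable. An isometric pair is a pair $(V_1,V_2)$ of commuting isometries on $\mathcal{H}$. An isometry $V$ is a shift if $V^{*m}\to0$ strongly. A BCL pair is an isometric pair with $V_1V_2$ a shift. $[V_2^*,V_1] := V_2^*V_1 - V_1V_2^*$. A compact normal pair is a BCL pair with $[V_2^*,V_1]$ compact and normal. $C(V_1,V_2) := I - V_1V_1^* - V_2V_2^* + V_1V_2V_1^*V_2^*$ and $E_\mu := \ker(C(V_1,V_2)-\mu I)$. A $3$-finite pair is a compact normal pair with $\operatorname{rank} C(V_1,V_2)=3$. Irreducible: no closed subspace other than $\{0\}$ and $\mathcal{H}$ invariant under $V_1,V_2,V_1^*,V_2^*$. *)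

theory Defs
  imports "HOL-Analysis.Analysis"
begin

text \<open>The library only has real inner product spaces, so we introduce complex ones.
  Convention: the inner product is conjugate-linear in the first argument.\<close>

class complex_inner = real_normed_vector +
  fixes scaleC :: "complex \<Rightarrow> 'a \<Rightarrow> 'a" (infixr "*\<^sub>C" 75)
  fixes cinner :: "'a \<Rightarrow> 'a \<Rightarrow> complex"
  assumes scaleR_scaleC: "scaleR r x = scaleC (complex_of_real r) x"
  assumes scaleC_add_right: "a *\<^sub>C (x + y) = a *\<^sub>C x + a *\<^sub>C y"
  assumes scaleC_add_left: "(a + b) *\<^sub>C x = a *\<^sub>C x + b *\<^sub>C x"
  assumes scaleC_scaleC: "a *\<^sub>C (b *\<^sub>C x) = (a * b) *\<^sub>C x"
  assumes scaleC_one: "1 *\<^sub>C x = x"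
  assumes cinner_commute: "cinner x y = cnj (cinner y x)"
  assumes cinner_add_left: "cinner (x + y) z = cinner x z + cinner y z"
  assumes cinner_scaleC_left: "cinner (a *\<^sub>C x) y = cnj a * cinner x y"
  assumes cinner_ge_zero: "0 \<le> Re (cinner x x)"
  assumes cinner_eq_zero_iff: "cinner x x = 0 \<longleftrightarrow> x = 0"
  assumes norm_eq_sqrt_cinner: "norm x = sqrt (Re (cinner x x))"

class chilbert = complex_inner + complete_space

definition separable_space :: "'a::topological_space itself \<Rightarrow> bool" where
  "separable_space _ \<longleftrightarrow> (\<exists>D::'a set. countable D \<and> closure D = UNIV)"

global_interpretation cvs: vector_space "scaleC :: complex \<Rightarrow> 'a::complex_inner \<Rightarrow> 'a"
  by unfold_locales (simp_all add: scaleC_add_right scaleC_add_left scaleC_scaleC scaleC_one)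

definition clinear :: "('a::complex_inner \<Rightarrow> 'b::complex_inner) \<Rightarrow> bool" where
  "clinear T \<longleftrightarrow> (\<forall>x y. T (x + y) = T x + T y) \<and> (\<forall>a x. T (a *\<^sub>C x) = a *\<^sub>C T x)"

definition bounded_clinear :: "('a::complex_inner \<Rightarrow> 'b::complex_inner) \<Rightarrow> bool" where
  "bounded_clinear T \<longleftrightarrow> clinear T \<and> (\<exists>K. \<forall>x. norm (T x) \<le> norm x * K)"

definition adj :: "('a::complex_inner \<Rightarrow> 'a) \<Rightarrow> 'a \<Rightarrow> 'a" where
  "adj T = (\<lambda>y. THE z. \<forall>x. cinner (T x) y = cinner x z)"

definition isometry :: "('a::complex_inner \<Rightarrow> 'a) \<Rightarrow> bool" where
  "isometry V \<longleftrightarrow> bounded_clinear V \<and> (\<forall>x. norm (V x) = norm x)"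

definition is_shift :: "('a::complex_inner \<Rightarrow> 'a) \<Rightarrow> bool" where
  "is_shift V \<longleftrightarrow> isometry V \<and> (\<forall>x. (\<lambda>m. (adj V ^^ m) x) \<longlonglongrightarrow> 0)"

definition isometric_pair :: "('a::complex_inner \<Rightarrow> 'a) \<Rightarrow> ('a \<Rightarrow> 'a) \<Rightarrow> bool" where
  "isometric_pair V1 V2 \<longleftrightarrow> isometry V1 \<and> isometry V2 \<and> V1 \<circ> V2 = V2 \<circ> V1"

definition BCL_pair :: "('a::complex_inner \<Rightarrow> 'a) \<Rightarrow> ('a \<Rightarrow> 'a) \<Rightarrow> bool" where
  "BCL_pair V1 V2 \<longleftrightarrow> isometric_pair V1 V2 \<and> is_shift (V1 \<circ> V2)"

definition cross_comm :: "('a::complex_inner \<Rightarrow> 'a) \<Rightarrow> ('a \<Rightarrow> 'a) \<Rightarrow> 'a \<Rightarrow> 'a" where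
  "cross_comm V1 V2 = (\<lambda>x. adj V2 (V1 x) - V1 (adj V2 x))"

definition compact_op :: "('a::complex_inner \<Rightarrow> 'a) \<Rightarrow> bool" where
  "compact_op T \<longleftrightarrow> bounded_clinear T \<and> compact (closure (T ` {x. norm x \<le> 1}))"

definition normal_op :: "('a::complex_inner \<Rightarrow> 'a) \<Rightarrow> bool" where
  "normal_op T \<longleftrightarrow> bounded_clinear T \<and> T \<circ> adj T = adj T \<circ> T"

definition compact_normal_pair :: "('a::complex_inner \<Rightarrow> 'a) \<Rightarrow> ('a \<Rightarrow> 'a) \<Rightarrow> bool" where
  "compact_normal_pair V1 V2 \<longleftrightarrow> BCL_pair V1 V2 \<and> compact_op (cross_comm V1 V2)
      \<and> normal_op (cross_comm V1 V2)"

definition defect_op :: "('a::complex_inner \<Rightarrow> 'a) \<Rightarrow> ('a \<Rightarrow> 'a) \<Rightarrow> 'a \<Rightarrow> 'a" where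
  "defect_op V1 V2 = (\<lambda>x. x - V1 (adj V1 x) - V2 (adj V2 x) + V1 (V2 (adj V1 (adj V2 x))))"

definition eigsp :: "('a::complex_inner \<Rightarrow> 'a) \<Rightarrow> complex \<Rightarrow> 'a set" where
  "eigsp T \<mu> = {x. T x = \<mu> *\<^sub>C x}"

definition E_sp :: "('a::complex_inner \<Rightarrow> 'a) \<Rightarrow> ('a \<Rightarrow> 'a) \<Rightarrow> complex \<Rightarrow> 'a set" where
  "E_sp V1 V2 \<mu> = eigsp (defect_op V1 V2) \<mu>"

text \<open>Rank = complex dimension of the range (a finite rank \<open>n > 0\<close> forces a finite basis).\<close>
definition op_rank :: "('a::complex_inner \<Rightarrow> 'a) \<Rightarrow> nat" where
  "op_rank T = cvs.dim (range T)"

definition three_finite_pair :: "('a::complex_inner \<Rightarrow> 'a) \<Rightarrow> ('a \<Rightarrow> 'a) \<Rightarrow> bool" where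
  "three_finite_pair V1 V2 \<longleftrightarrow> compact_normal_pair V1 V2 \<and> op_rank (defect_op V1 V2) = 3"

definition irreducible_pair :: "('a::complex_inner \<Rightarrow> 'a) \<Rightarrow> ('a \<Rightarrow> 'a) \<Rightarrow> bool" where
  "irreducible_pair V1 V2 \<longleftrightarrow>
     (\<forall>M. closed M \<and> cvs.subspace M \<and> V1 ` M \<subseteq> M \<and> V2 ` M \<subseteq> M
          \<and> adj V1 ` M \<subseteq> M \<and> adj V2 ` M \<subseteq> M \<longrightarrow> M = {0} \<or> M = UNIV)"

definition op_spectrum :: "('a::complex_inner \<Rightarrow> 'a) \<Rightarrow> complex set" where
  "op_spectrum T = {z. \<not> (\<exists>S. bounded_clinear S \<and> (\<forall>x. S (T x - z *\<^sub>C x) = x)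
                                 \<and> (\<forall>y. T (S y) - z *\<^sub>C S y = y))}"

definition orth_compl :: "'a::complex_inner set \<Rightarrow> 'a set" where
  "orth_compl S = {x. \<forall>y\<in>S. cinner y x = 0}"

definition op_kernel :: "('a::complex_inner \<Rightarrow> 'a) \<Rightarrow> 'a set" where
  "op_kernel T = {x. T x = 0}"

definition cinner3 :: "complex^3 \<Rightarrow> complex^3 \<Rightarrow> complex" where
  "cinner3 x y = (\<Sum>i\<in>UNIV. cnj (x $ i) * y $ i)"

definition diag3 :: "complex \<Rightarrow> complex \<Rightarrow> complex \<Rightarrow> complex^3^3" where
  "diag3 a b c = (\<chi> i j. if i = j then (if i = 1 then a else if i = 2 then b else c) else 0)"

definition unitarily_equiv_restr :: "('a::complex_inner \<Rightarrow> 'a) \<Rightarrow> 'a set \<Rightarrow> complex^3^3 \<Rightarrow> bool" where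
  "unitarily_equiv_restr T K D \<longleftrightarrow> T ` K \<subseteq> K \<and>
     (\<exists>U :: 'a \<Rightarrow> complex^3.
        (\<forall>x\<in>K. \<forall>y\<in>K. \<forall>a. U (a *\<^sub>C x + y) = a *s U x + U y)
      \<and> (\<forall>x\<in>K. \<forall>y\<in>K. cinner3 (U x) (U y) = cinner x y)
      \<and> U ` K = UNIV
      \<and> (\<forall>x\<in>K. U (T x) = D *v U x))"

end

theory Submission
  imports Defs "HOL-Computational_Algebra.Fundamental_Theorem_Algebra"
begin


lemma cinner_add_right: "cinner x (y + z) = cinner x y + cinner (x::'a::complex_inner) z"
  by (metis cinner_add_left cinner_commute complex_cnj_add)

lemma cinner_scaleC_right: "cinner x (a *\<^sub>C y) = a * cinner (x::'a::complex_inner) y"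
  by (metis cinner_commute cinner_scaleC_left complex_cnj_cnj complex_cnj_mult)

lemma cinner_zero_left[simp]: "cinner 0 (y::'a::complex_inner) = 0"
  by (metis add_cancel_right_right add_left_cancel cinner_add_left)

lemma cinner_zero_right[simp]: "cinner (y::'a::complex_inner) 0 = 0"
  by (metis cinner_commute cinner_zero_left complex_cnj_zero)

lemma cinner_minus_left: "cinner (- x) (y::'a::complex_inner) = - cinner x y"
  by (metis add.right_inverse add_eq_0_iff cinner_add_left cinner_zero_left)

lemma cinner_minus_right: "cinner y (- x::'a::complex_inner) = - cinner y x"
  by (metis add.right_inverse add_eq_0_iff cinner_add_right cinner_zero_right)

lemma cinner_diff_left: "cinner (x - z) (y::'a::complex_inner) = cinner x y - cinner z y"
  by (simp only: diff_conv_add_uminus cinner_add_left cinner_minus_left)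

lemma cinner_diff_right: "cinner y (x - z::'a::complex_inner) = cinner y x - cinner y z"
  by (simp only: diff_conv_add_uminus cinner_add_right cinner_minus_right)

lemmas cinner_simps = cinner_add_left cinner_add_right cinner_diff_left cinner_diff_right
  cinner_scaleC_left cinner_scaleC_right cinner_minus_left cinner_minus_right

lemma cinner_self: "cinner (x::'a::complex_inner) x = complex_of_real ((norm x)\<^sup>2)"
proof -
  have "Im (cinner x x) = 0"
    by (metis Im_complex_of_real Reals_cnj_iff cinner_commute complex_is_Real_iff)
  moreover have "Re (cinner x x) = (norm x)\<^sup>2"
    by (simp add: norm_eq_sqrt_cinner cinner_ge_zero)
  ultimately show ?thesis by (simp add: complex_eq_iff)
qed

lemma norm_sq_cinner: "(norm (x::'a::complex_inner))\<^sup>2 = Re (cinner x x)"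
  by (simp add: cinner_self)

lemma norm_scaleC: "norm (a *\<^sub>C (x::'a::complex_inner)) = cmod a * norm x"
proof -
  have "cinner (a *\<^sub>C x) (a *\<^sub>C x) = (cnj a * a) * cinner x x"
    by (simp add: cinner_simps)
  also have "cnj a * a = complex_of_real ((cmod a)\<^sup>2)"
    using complex_norm_square[of a] by (simp add: mult.commute)
  finally have c: "cinner (a *\<^sub>C x) (a *\<^sub>C x) = complex_of_real ((cmod a)\<^sup>2) * cinner x x" .
  have "(norm (a *\<^sub>C x))\<^sup>2 = Re (cinner (a *\<^sub>C x) (a *\<^sub>C x))" by (rule norm_sq_cinner)
  also have "\<dots> = (cmod a)\<^sup>2 * Re (cinner x x)" unfolding c by simp
  also have "Re (cinner x x) = (norm x)\<^sup>2" by (rule norm_sq_cinner[symmetric])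
  finally have "(norm (a *\<^sub>C x))\<^sup>2 = (cmod a)\<^sup>2 * (norm x)\<^sup>2" .
  then have "(norm (a *\<^sub>C x))\<^sup>2 = (cmod a * norm x)\<^sup>2" by (simp add: power_mult_distrib)
  then show ?thesis
    by (simp add: power2_eq_iff_nonneg)
qed

lemma scaleC_minus1: "(-1) *\<^sub>C (x::'a::complex_inner) = - x"
  by simp

lemma norm_add_sq: "(norm (x + y::'a::complex_inner))\<^sup>2 = (norm x)\<^sup>2 + (norm y)\<^sup>2 + 2 * Re (cinner x y)"
proof -
  have "cinner y x = cnj (cinner x y)" by (rule cinner_commute)
  then show ?thesis by (simp add: norm_sq_cinner cinner_simps)
qed

lemma norm_diff_sq: "(norm (x - y::'a::complex_inner))\<^sup>2 = (norm x)\<^sup>2 + (norm y)\<^sup>2 - 2 * Re (cinner x y)"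
proof -
  have "cinner y x = cnj (cinner x y)" by (rule cinner_commute)
  then show ?thesis by (simp add: norm_sq_cinner cinner_simps)
qed

lemma cinner_ext: assumes "\<And>z. cinner z a = cinner z (b::'a::complex_inner)" shows "a = b"
proof -
  have "cinner (a - b) (a - b) = 0" using assms[of "a-b"] by (simp add: cinner_diff_right)
  then show ?thesis by (simp add: cinner_eq_zero_iff)
qed

lemma aux_real1: "(ny::real) > 0 \<Longrightarrow> (q / ny\<^sup>2 * ny)\<^sup>2 = q\<^sup>2 / ny\<^sup>2"
  by (simp add: power2_eq_square)

lemma cinner_cs: "cmod (cinner (x::'a::complex_inner) y) \<le> norm x * norm y"
proof (cases "y = 0")
  case True then show ?thesis by simp
next
  case False
  define p where "p = cinner x y"
  define ny where "ny = norm y"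
  define t where "t = cnj p / complex_of_real (ny\<^sup>2)"
  have ny: "ny > 0" using False by (simp add: ny_def)
  have h1: "cmod t = cmod p / ny\<^sup>2"
    unfolding t_def using ny by (simp add: norm_divide norm_power)
  have pp: "cnj p * p = complex_of_real ((cmod p)\<^sup>2)"
    by (metis complex_norm_square mult.commute of_real_power)
  have h2: "t * p = complex_of_real ((cmod p)\<^sup>2 / ny\<^sup>2)"
    unfolding t_def by (simp only: pp of_real_divide of_real_power times_divide_eq_left)
  have "0 \<le> (norm (x - t *\<^sub>C y))\<^sup>2" by (rule zero_le_power2)
  also have "(norm (x - t *\<^sub>C y))\<^sup>2 = (norm x)\<^sup>2 + (cmod t * ny)\<^sup>2 - 2 * Re (t * p)"
    by (simp only: norm_diff_sq norm_scaleC cinner_scaleC_right p_def ny_def)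
  also have "\<dots> = (norm x)\<^sup>2 + (cmod p / ny\<^sup>2 * ny)\<^sup>2 - 2 * ((cmod p)\<^sup>2 / ny\<^sup>2)"
    by (simp only: h1 h2 Re_complex_of_real)
  also have "\<dots> = (norm x)\<^sup>2 - (cmod p)\<^sup>2 / ny\<^sup>2"
    using aux_real1[OF ny, of "cmod p"] by linarith
  finally have "(cmod p)\<^sup>2 / ny\<^sup>2 \<le> (norm x)\<^sup>2" by linarith
  then have "(cmod p)\<^sup>2 \<le> (norm x)\<^sup>2 * ny\<^sup>2"
    using ny by (simp add: divide_le_eq)
  then have "(cmod p)\<^sup>2 \<le> (norm x * ny)\<^sup>2"
    by (simp only: power_mult_distrib)
  then show ?thesis
    unfolding p_def ny_def by (meson mult_nonneg_nonneg norm_ge_zero power2_le_imp_le)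
qed

lemma bounded_linear_cinner_left: "bounded_linear (\<lambda>x::'a::complex_inner. cinner x w)"
proof (rule bounded_linear_intro[where K="norm w"])
  show "cinner (x + y) w = cinner x w + cinner y w" for x y by (rule cinner_add_left)
  show "cinner (r *\<^sub>R x) w = r *\<^sub>R cinner x w" for r x
    by (simp add: scaleR_scaleC cinner_scaleC_left scaleR_conv_of_real)
  show "norm (cinner x w) \<le> norm x * norm w" for x using cinner_cs[of x w] by simp
qed

lemma bounded_linear_cinner_right: "bounded_linear (\<lambda>x::'a::complex_inner. cinner w x)"
proof (rule bounded_linear_intro[where K="norm w"])
  show "cinner w (x + y) = cinner w x + cinner w y" for x y by (rule cinner_add_right)
  show "cinner w (r *\<^sub>R x) = r *\<^sub>R cinner w x" for r x
    by (simp add: scaleR_scaleC cinner_scaleC_right scaleR_conv_of_real)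
  show "norm (cinner w x) \<le> norm x * norm w" for x using cinner_cs[of w x] by (simp add: mult.commute)
qed

lemma bounded_clinear_bounded_linear:
  assumes "bounded_clinear T" shows "bounded_linear T"
proof -
  from assms obtain K where K: "\<forall>x. norm (T x) \<le> norm x * K" and lin: "clinear T"
    unfolding bounded_clinear_def by blast
  show ?thesis
  proof (rule bounded_linear_intro[where K=K])
    show "T (x + y) = T x + T y" for x y using lin by (simp add: clinear_def)
    show "T (r *\<^sub>R x) = r *\<^sub>R T x" for r x using lin by (simp add: clinear_def scaleR_scaleC)
    show "norm (T x) \<le> norm x * K" for x using K by simp
  qed
qed


lemma iso_add: "isometry V \<Longrightarrow> V (x + y) = V x + V y"
  by (simp add: isometry_def bounded_clinear_def clinear_def)
lemma iso_scaleC: "isometry V \<Longrightarrow> V (a *\<^sub>C x) = a *\<^sub>C V x"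
  by (simp add: isometry_def bounded_clinear_def clinear_def)
lemma iso_scaleR: "isometry V \<Longrightarrow> V (a *\<^sub>R x) = a *\<^sub>R V x"
  by (simp add: iso_scaleC scaleR_scaleC)
lemma iso_zero: "isometry V \<Longrightarrow> V 0 = 0"
  by (metis add_cancel_right_right iso_add)
lemma iso_minus: "isometry V \<Longrightarrow> V (- x) = - V x"
  by (metis add.right_inverse add_eq_0_iff iso_add iso_zero)
lemma iso_diff: "isometry V \<Longrightarrow> V (x - y) = V x - V y"
  by (simp add: diff_conv_add_uminus iso_add iso_minus del: add_uminus_conv_diff)
lemma iso_norm: "isometry V \<Longrightarrow> norm (V x) = norm x"
  by (simp add: isometry_def)
lemma iso_bl: "isometry V \<Longrightarrow> bounded_linear V"
  by (simp add: isometry_def bounded_clinear_bounded_linear)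

lemma Re_cinner_polar: "Re (cinner x (y::'a::complex_inner)) = ((norm (x + y))\<^sup>2 - (norm x)\<^sup>2 - (norm y)\<^sup>2) / 2"
  by (simp add: norm_add_sq)

lemma iso_cinner:
  assumes V: "isometry V" shows "cinner (V x) (V y) = cinner x y"
proof -
  have re: "Re (cinner (V x) (V y)) = Re (cinner x y)" for x y
    by (simp add: Re_cinner_polar iso_add[OF V, symmetric] iso_norm[OF V])
  have "Im (cinner x y) = - Re (cinner x (\<i> *\<^sub>C y))" for x y :: 'a
    by (simp add: cinner_scaleC_right)
  then have im: "Im (cinner (V x) (V y)) = Im (cinner x y)"
    using re[of x "\<i> *\<^sub>C y"] by (simp add: iso_scaleC[OF V])
  show ?thesis using re[of x y] im by (simp add: complex_eq_iff)
qed

lemma parallelogram: "(norm (u - v::'a::complex_inner))\<^sup>2 = 2 * (norm u)\<^sup>2 + 2 * (norm v)\<^sup>2 - (norm (u + v))\<^sup>2"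
  by (simp add: norm_add_sq norm_diff_sq)

lemma closest_point:
  fixes V :: "'a::chilbert \<Rightarrow> 'a"
  assumes V: "isometry V"
  shows "\<exists>w. \<forall>z. norm (y - V w) \<le> norm (y - V z)"
proof -
  define d where "d = Inf (range (\<lambda>x. norm (y - V x)))"
  have bdd: "bdd_below (range (\<lambda>x. norm (y - V x)))" by (rule bdd_belowI[of _ 0]) auto
  have dle: "d \<le> norm (y - V z)" for z unfolding d_def by (rule cInf_lower[OF _ bdd]) auto
  have d0: "0 \<le> d" unfolding d_def by (rule cInf_greatest) auto
  define \<delta> where "\<delta> n = inverse (real (Suc n))" for n
  have \<delta>pos: "0 < \<delta> n" for n by (simp add: \<delta>_def)
  have \<delta>le1: "\<delta> n \<le> 1" for n by (simp add: \<delta>_def inverse_le_1_iff)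
  have "\<exists>x. norm (y - V x) < d + \<delta> n" for n
  proof -
    have "d < d + \<delta> n" using \<delta>pos by simp
    then obtain a where "a \<in> range (\<lambda>x. norm (y - V x))" "a < d + \<delta> n"
      unfolding d_def using cInf_lessD[of "range (\<lambda>x. norm (y - V x))"] by (metis d_def rangeI empty_iff)
    then show ?thesis by auto
  qed
  then obtain xs where xs: "\<And>n. norm (y - V (xs n)) < d + \<delta> n" by metis
  have key: "(norm (xs m - xs n))\<^sup>2 \<le> (4 * d + 2) * (\<delta> m + \<delta> n)" for m n
  proof -
    define u where "u = y - V (xs m)"
    define v where "v = y - V (xs n)"
    define mid where "mid = (1/2::real) *\<^sub>R (xs m + xs n)"
    have uv: "u - v = V (xs n - xs m)" by (simp add: u_def v_def iso_diff[OF V])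
    have "u + v = 2 *\<^sub>R (y - V mid)"
      by (simp add: u_def v_def mid_def iso_scaleR[OF V] iso_add[OF V] scaleR_diff_right algebra_simps scaleR_2)
    then have "norm (u + v) = 2 * norm (y - V mid)" by simp
    then have n1: "(norm (u + v))\<^sup>2 \<ge> 4 * d\<^sup>2"
      using dle[of mid] d0 by (simp add: power2_eq_square mult_mono)
    have nu: "norm u \<le> d + \<delta> m" "norm v \<le> d + \<delta> n"
      using xs[of m] xs[of n] by (simp_all add: u_def v_def less_imp_le)
    have "(norm u)\<^sup>2 \<le> (d + \<delta> m)\<^sup>2" using nu(1) by (simp add: power_mono)
    moreover have "(norm v)\<^sup>2 \<le> (d + \<delta> n)\<^sup>2" using nu(2) by (simp add: power_mono)
    moreover have "(norm (xs m - xs n))\<^sup>2 = (norm (u - v))\<^sup>2"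
      by (simp add: uv iso_norm[OF V] norm_minus_commute)
    ultimately have "(norm (xs m - xs n))\<^sup>2 \<le> 2 * (d + \<delta> m)\<^sup>2 + 2 * (d + \<delta> n)\<^sup>2 - 4 * d\<^sup>2"
      using n1 parallelogram[of u v] by linarith
    also have "\<dots> = 4 * d * \<delta> m + 2 * \<delta> m * \<delta> m + 4 * d * \<delta> n + 2 * \<delta> n * \<delta> n"
      by (simp add: power2_eq_square algebra_simps)
    also have "\<dots> \<le> 4 * d * \<delta> m + 2 * \<delta> m + 4 * d * \<delta> n + 2 * \<delta> n"
      using \<delta>pos \<delta>le1 by (smt (verit) mult_left_le)
    also have "\<dots> = (4 * d + 2) * (\<delta> m + \<delta> n)" by (simp add: algebra_simps)
    finally show ?thesis .
  qed
  have "Cauchy xs"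
  proof (rule CauchyI)
    fix e :: real assume e: "0 < e"
    define K where "K = 4 * d + 2"
    have K: "K > 0" using d0 by (simp add: K_def)
    obtain M where M: "inverse (real (Suc M)) < e\<^sup>2 / (2 * K)"
      using e K by (metis divide_pos_pos reals_Archimedean zero_less_mult_iff zero_less_numeral zero_less_power)
    show "\<exists>M. \<forall>m\<ge>M. \<forall>n\<ge>M. norm (xs m - xs n) < e"
    proof (intro exI allI impI)
      fix m n assume mn: "M \<le> m" "M \<le> n"
      have "\<delta> m \<le> inverse (real (Suc M))" "\<delta> n \<le> inverse (real (Suc M))"
        using mn by (simp_all add: \<delta>_def le_imp_inverse_le)
      then have "\<delta> m + \<delta> n < 2 * (e\<^sup>2 / (2 * K))" using M by linarith
      then have "\<delta> m + \<delta> n < e\<^sup>2 / K" using K by simp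
      then have "K * (\<delta> m + \<delta> n) < e\<^sup>2" using K by (simp add: field_simps)
      then have "(norm (xs m - xs n))\<^sup>2 < e\<^sup>2" using key[of m n] by (simp add: K_def)
      then show "norm (xs m - xs n) < e" using e by (simp add: power_less_imp_less_base)
    qed
  qed
  then obtain w where w: "xs \<longlonglongrightarrow> w" using Cauchy_convergent_iff convergent_def by blast
  have l1: "\<delta> \<longlonglongrightarrow> 0" unfolding \<delta>_def by (rule LIMSEQ_inverse_real_of_nat)
  have l2: "(\<lambda>n. norm (xs n - w)) \<longlonglongrightarrow> 0" by (rule tendsto_norm_zero[OF LIM_zero[OF w]])
  have lim: "(\<lambda>n. d + \<delta> n + norm (xs n - w)) \<longlonglongrightarrow> d + 0 + 0"
    by (intro tendsto_add tendsto_const l1 l2)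
  have "norm (y - V w) \<le> d"
  proof -
    have "norm (y - V w) \<le> d + \<delta> n + norm (xs n - w)" for n
    proof -
      have "y - V w = (y - V (xs n)) + V (xs n - w)" by (simp add: iso_diff[OF V])
      then have "norm (y - V w) \<le> norm (y - V (xs n)) + norm (xs n - w)"
        by (metis iso_norm[OF V] norm_triangle_ineq)
      then show ?thesis using xs[of n] by simp
    qed
    then show ?thesis using LIMSEQ_le_const[OF lim] by auto
  qed
  then show ?thesis using dle by (meson order_trans)
qed

lemma iso_adjoint_exists:
  fixes V :: "'a::chilbert \<Rightarrow> 'a"
  assumes V: "isometry V"
  shows "\<exists>w. \<forall>x. cinner (V x) y = cinner x w"
proof -
  obtain w where w: "\<And>z. norm (y - V w) \<le> norm (y - V z)" using closest_point[OF V] by blast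
  define r where "r = y - V w"
  have orth: "cinner (V u) r = 0" for u
  proof (rule ccontr)
    assume cne: "cinner (V u) r \<noteq> 0"
    define c where "c = cinner (V u) r"
    define s where "s = inverse ((norm u)\<^sup>2 + 1)"
    have p: "0 < (norm u)\<^sup>2 + 1" by (metis add_nonneg_pos zero_less_one zero_le_power2)
    have s: "0 < s" "s * (norm u)\<^sup>2 < 1"
      using p by (simp_all add: s_def field_simps)
    have c2: "(cmod c)\<^sup>2 > 0" using cne c_def by simp
    have eq: "y - V (w + (complex_of_real s * c) *\<^sub>C u) = r - (complex_of_real s * c) *\<^sub>C V u"
      by (simp add: r_def iso_add[OF V] iso_scaleC[OF V])
    have "norm r \<le> norm (r - (complex_of_real s * c) *\<^sub>C V u)"
      using w[of "w + (complex_of_real s * c) *\<^sub>C u"] by (simp only: eq r_def[symmetric])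
    then have "(norm r)\<^sup>2 \<le> (norm (r - (complex_of_real s * c) *\<^sub>C V u))\<^sup>2"
      by (rule power_mono[OF _ norm_ge_zero])
    also have "\<dots> = (norm r)\<^sup>2 + (s * cmod c * norm u)\<^sup>2 - 2 * Re (complex_of_real s * c * cinner r (V u))"
      using s by (simp add: norm_diff_sq norm_scaleC iso_norm[OF V] cinner_scaleC_right norm_mult)
    finally have A: "(norm r)\<^sup>2 \<le> (norm r)\<^sup>2 + (s * cmod c * norm u)\<^sup>2 - 2 * Re (complex_of_real s * c * cinner r (V u))" .
    have cc: "c * cinner r (V u) = complex_of_real ((cmod c)\<^sup>2)"
      unfolding c_def by (metis cinner_commute complex_norm_square mult.commute of_real_power)
    have re: "Re (complex_of_real s * c * cinner r (V u)) = s * (cmod c)\<^sup>2"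
      by (simp add: mult.assoc cc)
    have "0 \<le> (s * cmod c * norm u)\<^sup>2 - 2 * s * (cmod c)\<^sup>2"
      using A re by linarith
    then have "2 * s * (cmod c)\<^sup>2 \<le> s * (s * (norm u)\<^sup>2) * (cmod c)\<^sup>2"
      by (simp add: power_mult_distrib power2_eq_square algebra_simps)
    moreover have "s * (s * (norm u)\<^sup>2) * (cmod c)\<^sup>2 < s * 1 * (cmod c)\<^sup>2"
      using s c2 by (intro mult_strict_right_mono mult_strict_left_mono) auto
    ultimately have lt: "2 * s * (cmod c)\<^sup>2 < s * 1 * (cmod c)\<^sup>2" by (rule le_less_trans)
    have P: "0 < s * (cmod c)\<^sup>2" using s(1) c2 by simp
    have "2 * s * (cmod c)\<^sup>2 = 2 * (s * (cmod c)\<^sup>2)" "s * 1 * (cmod c)\<^sup>2 = s * (cmod c)\<^sup>2"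
      by simp_all
    then show False using lt P by linarith
  qed
  show ?thesis
  proof (intro exI allI)
    fix x
    have "y = r + V w" by (simp add: r_def)
    then have "cinner (V x) y = cinner (V x) r + cinner (V x) (V w)" by (simp add: cinner_add_right)
    then show "cinner (V x) y = cinner x w" using orth[of x] by (simp add: iso_cinner[OF V])
  qed
qed

lemma adj_iso:
  fixes V :: "'a::chilbert \<Rightarrow> 'a"
  assumes V: "isometry V"
  shows "cinner (V x) y = cinner x (adj V y)"
proof -
  obtain w where w: "\<forall>x. cinner (V x) y = cinner x w" using iso_adjoint_exists[OF V] by blast
  have "(THE z. \<forall>x. cinner (V x) y = cinner x z) = w"
  proof (rule the_equality)
    show "\<forall>x. cinner (V x) y = cinner x w" by (rule w)
    show "z = w" if "\<forall>x. cinner (V x) y = cinner x z" for z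
      using that w by (metis cinner_ext)
  qed
  then show ?thesis using w by (simp add: adj_def)
qed

lemma adj_unique:
  assumes "\<And>x y. cinner (T x) y = cinner x (S y)"
  shows "adj T = S"
proof
  fix y
  show "adj T y = S y" unfolding adj_def
    by (rule the_equality) (use assms in \<open>auto intro: cinner_ext\<close>)
qed


lemma cinner_conj_swap: "cinner y x = cnj (cinner x (y::'a::complex_inner))"
  by (rule cinner_commute)

lemma adj_iso': "isometry V \<Longrightarrow> cinner y (V x) = cinner (adj V y) (x::'a::chilbert)"
  by (metis adj_iso cinner_commute)

lemma adj_iso_lin:
  fixes V :: "'a::chilbert \<Rightarrow> 'a"
  assumes V: "isometry V"
  shows "adj V (x + y) = adj V x + adj V y" "adj V (a *\<^sub>C x) = a *\<^sub>C adj V x"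
    "adj V 0 = 0" "adj V (- x) = - adj V x" "adj V (x - y) = adj V x - adj V y"
    "adj V (V x) = x"
proof -
  show 1: "adj V (x + y) = adj V x + adj V y"
    by (rule cinner_ext) (simp add: adj_iso[OF V, symmetric] cinner_add_right)
  show "adj V (a *\<^sub>C x) = a *\<^sub>C adj V x"
    by (rule cinner_ext) (simp add: adj_iso[OF V, symmetric] cinner_scaleC_right)
  show 0: "adj V 0 = 0"
    by (rule cinner_ext) (simp add: adj_iso[OF V, symmetric])
  show m: "adj V (- x) = - adj V x"
    by (rule cinner_ext) (simp add: adj_iso[OF V, symmetric] cinner_minus_right)
  show "adj V (x - y) = adj V x - adj V y"
    by (rule cinner_ext) (simp add: adj_iso[OF V, symmetric] cinner_diff_right)
  show "adj V (V x) = x"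
    by (rule cinner_ext) (simp add: adj_iso[OF V, symmetric] iso_cinner[OF V])
qed

lemma adj_iso_norm:
  fixes V :: "'a::chilbert \<Rightarrow> 'a"
  assumes V: "isometry V"
  shows "norm (adj V x) \<le> norm x"
proof -
  have "(norm (adj V x))\<^sup>2 = Re (cinner (adj V x) (adj V x))" by (rule norm_sq_cinner)
  also have "\<dots> = Re (cinner (V (adj V x)) x)" by (simp add: adj_iso[OF V])
  also have "\<dots> \<le> cmod (cinner (V (adj V x)) x)" by (rule complex_Re_le_cmod)
  also have "\<dots> \<le> norm (adj V x) * norm x" using cinner_cs[of "V (adj V x)" x] by (simp add: iso_norm[OF V])
  finally have "(norm (adj V x))\<^sup>2 \<le> norm (adj V x) * norm x" .
  then show ?thesis
    by (metis mult_le_cancel_left_pos norm_ge_zero order_le_less power2_eq_square mult_zero_left order_refl)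
qed

lemma adj_iso_bl:
  fixes V :: "'a::chilbert \<Rightarrow> 'a"
  assumes V: "isometry V"
  shows "bounded_linear (adj V)"
proof (rule bounded_linear_intro[where K=1])
  show "adj V (x + y) = adj V x + adj V y" for x y by (rule adj_iso_lin(1)[OF V])
  show "adj V (r *\<^sub>R x) = r *\<^sub>R adj V x" for r x by (simp add: scaleR_scaleC adj_iso_lin(2)[OF V])
  show "norm (adj V x) \<le> norm x * 1" for x using adj_iso_norm[OF V] by simp
qed

locale ipair =
  fixes V1 V2 :: "'a::chilbert \<Rightarrow> 'a"
  assumes iso1: "isometry V1" and iso2: "isometry V2" and comm: "\<And>x. V1 (V2 x) = V2 (V1 x)"
    and normal: "\<And>x. cross_comm V1 V2 (adj V1 (V2 x) - V2 (adj V1 x))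
                   = adj V1 (V2 (cross_comm V1 V2 x)) - V2 (adj V1 (cross_comm V1 V2 x))"
begin

abbreviation "A1 \<equiv> adj V1"
abbreviation "A2 \<equiv> adj V2"
abbreviation "X \<equiv> cross_comm V1 V2"
definition "Xd x = A1 (V2 x) - V2 (A1 x)"
abbreviation "C \<equiv> defect_op V1 V2"

lemmas V1lin = iso_add[OF iso1] iso_scaleC[OF iso1] iso_zero[OF iso1] iso_minus[OF iso1] iso_diff[OF iso1]
lemmas V2lin = iso_add[OF iso2] iso_scaleC[OF iso2] iso_zero[OF iso2] iso_minus[OF iso2] iso_diff[OF iso2]
lemmas A1lin = adj_iso_lin[OF iso1]
lemmas A2lin = adj_iso_lin[OF iso2]
lemmas lins = V1lin V2lin A1lin A2lin

lemma a1: "cinner (V1 x) y = cinner x (A1 y)" by (rule adj_iso[OF iso1])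
lemma a2: "cinner (V2 x) y = cinner x (A2 y)" by (rule adj_iso[OF iso2])
lemma a1': "cinner y (V1 x) = cinner (A1 y) x" by (rule adj_iso'[OF iso1])
lemma a2': "cinner y (V2 x) = cinner (A2 y) x" by (rule adj_iso'[OF iso2])

lemma a1r: "cinner (A1 y) x = cinner y (V1 x)" by (rule a1'[symmetric])
lemma a2r: "cinner (A2 y) x = cinner y (V2 x)" by (rule a2'[symmetric])

lemma A12: "A1 (A2 x) = A2 (A1 x)"
  by (rule cinner_ext) (simp add: a1[symmetric] a2[symmetric] comm)

lemma X_eq: "X x = A2 (V1 x) - V1 (A2 x)" by (simp add: cross_comm_def)
lemma C_eq: "C x = x - V1 (A1 x) - V2 (A2 x) + V1 (V2 (A1 (A2 x)))" by (simp add: defect_op_def)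

lemma X_adj: "cinner (X x) y = cinner x (Xd y)"
  by (simp add: X_eq Xd_def cinner_diff_left cinner_diff_right a1 a2 a1r a2r)

lemma X_adj': "cinner y (X x) = cinner (Xd y) x"
  by (metis X_adj cinner_commute)

lemma X_lin: "X (x + y) = X x + X y" "X (a *\<^sub>C x) = a *\<^sub>C X x" "X 0 = 0" "X (x - y) = X x - X y"
  by (simp_all add: X_eq lins algebra_simps cvs.scale_right_diff_distrib)

lemma Xd_lin: "Xd (x + y) = Xd x + Xd y" "Xd (a *\<^sub>C x) = a *\<^sub>C Xd x" "Xd 0 = 0" "Xd (x - y) = Xd x - Xd y"
  by (simp_all add: Xd_def lins algebra_simps cvs.scale_right_diff_distrib)

lemma C_lin: "C (x + y) = C x + C y" "C (a *\<^sub>C x) = a *\<^sub>C C x" "C 0 = 0" "C (x - y) = C x - C y"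
  by (simp_all add: C_eq lins algebra_simps cvs.scale_right_diff_distrib)

lemma C_adj: "cinner (C x) y = cinner x (C y)"
  by (simp add: C_eq cinner_diff_left cinner_diff_right cinner_add_left cinner_add_right a1 a2 a1' a2' A12)

lemma normal': "X (Xd x) = Xd (X x)"
  using normal by (simp add: Xd_def)

lemma normX: "norm (X x) = norm (Xd x)"
proof -
  have "cinner (X x) (X x) = cinner x (Xd (X x))" by (rule X_adj)
  also have "\<dots> = cinner x (X (Xd x))" by (simp add: normal')
  also have "\<dots> = cinner (Xd x) (Xd x)" by (rule X_adj')
  finally have "(norm (X x))\<^sup>2 = (norm (Xd x))\<^sup>2" by (simp only: cinner_self of_real_eq_iff)
  then show ?thesis by (simp add: power2_eq_iff_nonneg)
qed

lemma XV2: "X (V2 x) = 0" by (simp add: X_eq comm A2lin)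
lemma XdV1: "Xd (V1 x) = 0" by (simp add: Xd_def comm[symmetric] A1lin)
lemma XV1: "X (V1 x) = 0" using normX[of "V1 x"] by (simp add: XdV1)
lemma XdV2: "Xd (V2 x) = 0" using normX[of "V2 x"] by (simp add: XV2)
lemma A1X: "A1 (X x) = 0" by (simp add: X_eq A1lin A12)
lemma A2X: "A2 (X x) = 0"
  by (rule cinner_ext) (simp add: a2[symmetric] X_adj' XdV2)

lemma E1_char: "C x = x \<longleftrightarrow> A1 x = 0 \<and> A2 x = 0"
proof
  assume "A1 x = 0 \<and> A2 x = 0"
  then show "C x = x" by (simp add: C_eq A12 lins)
next
  assume Cx: "C x = x"
  have "cinner x (C x) = cinner x x" by (simp add: Cx)
  then have h: "cinner x x - cinner (A1 x) (A1 x) - cinner (A2 x) (A2 x) + cinner (A1 (A2 x)) (A1 (A2 x)) = cinner x x"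
    by (simp add: C_eq cinner_diff_right cinner_add_right a1' a2' A12)
  have "Re (cinner x x) - Re (cinner (A1 x) (A1 x)) - Re (cinner (A2 x) (A2 x)) + Re (cinner (A1 (A2 x)) (A1 (A2 x))) = Re (cinner x x)"
    using arg_cong[where f=Re, OF h] by simp
  then have eq: "(norm (A1 x))\<^sup>2 + (norm (A2 x))\<^sup>2 = (norm (A1 (A2 x)))\<^sup>2"
    unfolding norm_sq_cinner by linarith
  have "norm (A1 (A2 x)) \<le> norm (A2 x)" by (rule adj_iso_norm[OF iso1])
  then have le1: "(norm (A1 (A2 x)))\<^sup>2 \<le> (norm (A2 x))\<^sup>2" by (simp add: power_mono)
  have "norm (A1 (A2 x)) \<le> norm (A1 x)" by (simp add: A12 adj_iso_norm[OF iso2])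
  then have le2: "(norm (A1 (A2 x)))\<^sup>2 \<le> (norm (A1 x))\<^sup>2" by (simp add: power_mono)
  have "(norm (A1 x))\<^sup>2 = 0" "(norm (A2 x))\<^sup>2 = 0" using eq le1 le2 by (smt (verit) zero_le_power2)+
  then show "A1 x = 0 \<and> A2 x = 0" by simp
qed

end


locale clin_op =
  fixes T :: "'a::complex_inner \<Rightarrow> 'a"
  assumes T_add: "\<And>x y. T (x + y) = T x + T y" and T_scale: "\<And>a x. T (a *\<^sub>C x) = a *\<^sub>C T x"
begin

lemma T_zero: "T 0 = 0"
  by (metis add_cancel_right_right T_add)

definition peval :: "complex poly \<Rightarrow> 'a \<Rightarrow> 'a" where
  "peval p x = fold_coeffs (\<lambda>a y. a *\<^sub>C x + T y) p 0"

lemma peval_0[simp]: "peval 0 x = 0"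
  by (simp add: peval_def)

lemma peval_pCons: "peval (pCons a p) x = a *\<^sub>C x + T (peval p x)"
proof (cases "p = 0 \<and> a = 0")
  case True then show ?thesis by (simp add: peval_def T_zero)
next
  case False
  then have "fold_coeffs (\<lambda>a y. a *\<^sub>C x + T y) (pCons a p) = (\<lambda>y. a *\<^sub>C x + T y) \<circ> fold_coeffs (\<lambda>a y. a *\<^sub>C x + T y) p"
    by (cases "p = 0") (simp_all)
  then show ?thesis by (simp add: peval_def)
qed

lemma peval_add: "peval (p + q) x = peval p x + peval q x"
proof (induction p q rule: poly_induct2)
  case 0 then show ?case by simp
next
  case (pCons a p b q)
  then show ?case by (simp add: peval_pCons T_add scaleC_add_left algebra_simps)
qed

lemma peval_smult: "peval (smult c p) x = c *\<^sub>C peval p x"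
proof (induction p)
  case 0 then show ?case by simp
next
  case (pCons a p)
  then show ?case by (simp add: peval_pCons T_scale scaleC_add_right)
qed

lemma peval_linfac: "peval ([:- r, 1:] * q) x = T (peval q x) - r *\<^sub>C peval q x"
proof -
  have eq: "[:- r, 1:] * q = smult (- r) q + pCons 0 q" by simp
  show ?thesis unfolding eq peval_add peval_smult peval_pCons
    by (simp add: cvs.scale_minus_left)
qed

lemma peval_monom: "peval (monom c k) x = c *\<^sub>C (T ^^ k) x"
proof (induction k)
  case 0
  have "monom c 0 = pCons c 0" by (simp add: monom_0)
  then show ?case by (simp add: peval_pCons T_zero)
next
  case (Suc k)
  then show ?case by (simp add: monom_Suc peval_pCons T_scale)
qed

lemma peval_sum: "peval (sum f A) x = (\<Sum>a\<in>A. peval (f a) x)"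
  by (induction A rule: infinite_finite_induct) (simp_all add: peval_add)

lemma peval_in:
  assumes E: "cvs.subspace E" "\<And>y. y \<in> E \<Longrightarrow> T y \<in> E" and x: "x \<in> E"
  shows "peval p x \<in> E"
proof (induction p)
  case 0 then show ?case using E by (simp add: cvs.subspace_0)
next
  case (pCons a p)
  then show ?case using E x by (simp add: peval_pCons cvs.subspace_add cvs.subspace_scale)
qed

lemma eig_from_poly:
  assumes E: "cvs.subspace E" "\<And>y. y \<in> E \<Longrightarrow> T y \<in> E"
  shows "q \<noteq> 0 \<Longrightarrow> peval q x = 0 \<Longrightarrow> x \<in> E \<Longrightarrow> x \<noteq> 0 \<Longrightarrow> \<exists>f \<beta>. f \<in> E \<and> f \<noteq> 0 \<and> T f = \<beta> *\<^sub>C f"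
proof (induction "degree q" arbitrary: q rule: less_induct)
  case less
  show ?case
  proof (cases "degree q = 0")
    case True
    then obtain a where "q = [:a:]" by (metis degree_eq_zeroE)
    then have "peval q x = a *\<^sub>C x" by (simp add: peval_pCons T_zero)
    moreover have "a \<noteq> 0" using less.prems \<open>q = [:a:]\<close> by simp
    ultimately show ?thesis using less.prems by simp
  next
    case False
    then have "\<not> constant (poly q)" by (simp add: constant_degree)
    then obtain r where "poly q r = 0" using fundamental_theorem_of_algebra by blast
    then obtain q' where q': "q = [:- r, 1:] * q'" by (metis poly_eq_0_iff_dvd dvdE)
    have q'0: "q' \<noteq> 0" using q' less.prems by auto
    have "degree q = degree [:- r, 1:] + degree q'" unfolding q' by (rule degree_mult_eq) (use q'0 in auto)
    then have dq: "degree q' < degree q" by simp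
    define y where "y = peval q' x"
    have "peval q x = T y - r *\<^sub>C y" unfolding q' y_def by (rule peval_linfac)
    then have Ty: "T y = r *\<^sub>C y" using less.prems by simp
    show ?thesis
    proof (cases "y = 0")
      case True
      then show ?thesis using less.hyps[OF dq q'0] less.prems by (simp add: y_def)
    next
      case False
      have "y \<in> E" unfolding y_def by (rule peval_in[OF E less.prems(3)])
      then show ?thesis using False Ty by blast
    qed
  qed
qed

lemma eig_exists:
  assumes E: "cvs.subspace E" "\<And>y. y \<in> E \<Longrightarrow> T y \<in> E"
    and B: "E \<subseteq> cvs.span B" "finite B" and g: "g \<in> E" "g \<noteq> 0"
  shows "\<exists>f \<beta>. f \<in> E \<and> f \<noteq> 0 \<and> T f = \<beta> *\<^sub>C f"
proof -
  define n where "n = card B"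
  define K where "K k = (T ^^ k) g" for k
  have KE: "K k \<in> E" for k
  proof (induction k)
    case 0 then show ?case using g by (simp add: K_def)
  next
    case (Suc k) then show ?case using E by (simp add: K_def)
  qed
  have "\<exists>c::nat\<Rightarrow>complex. (\<Sum>k\<le>n. c k *\<^sub>C K k) = 0 \<and> (\<exists>k\<le>n. c k \<noteq> 0)"
  proof (cases "inj_on K {..n}")
    case False
    then obtain i j where ij: "i \<le> n" "j \<le> n" "i \<noteq> j" "K i = K j"
      unfolding inj_on_def by auto
    define c :: "nat \<Rightarrow> complex" where "c k = (if k = i then 1 else if k = j then -1 else 0)" for k :: nat
    have "(\<Sum>k\<le>n. c k *\<^sub>C K k) = (\<Sum>k\<in>{i,j}. c k *\<^sub>C K k)"
      by (rule sum.mono_neutral_right) (use ij in \<open>auto simp: c_def\<close>)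
    also have "\<dots> = 0" using ij by (simp add: c_def)
    finally show ?thesis using ij by (intro exI[of _ c]) (auto simp: c_def)
  next
    case True
    have "K ` {..n} \<subseteq> cvs.span B" using KE B by auto
    moreover have "card (K ` {..n}) = Suc n" using True by (simp add: card_image)
    ultimately have "cvs.dependent (K ` {..n})"
      using cvs.independent_span_bound[OF B(2)] n_def by fastforce
    then obtain t u where tu: "finite t" "t \<subseteq> K ` {..n}" "(\<Sum>v\<in>t. u v *\<^sub>C v) = 0" "\<exists>v\<in>t. u v \<noteq> 0"
      unfolding cvs.dependent_explicit by blast
    define c :: "nat \<Rightarrow> complex" where "c k = (if K k \<in> t then u (K k) else 0)" for k
    have "(\<Sum>k\<le>n. c k *\<^sub>C K k) = (\<Sum>v\<in>K ` {..n}. (if v \<in> t then u v else 0) *\<^sub>C v)"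
      by (simp add: sum.reindex[OF True] c_def)
    also have "\<dots> = (\<Sum>v\<in>t. u v *\<^sub>C v)"
      by (rule sum.mono_neutral_cong_right) (use tu in auto)
    finally have "(\<Sum>k\<le>n. c k *\<^sub>C K k) = 0" using tu by simp
    moreover obtain v where "v \<in> t" "u v \<noteq> 0" using tu by blast
    then obtain k where "k \<le> n" "v = K k" using tu by blast
    ultimately show ?thesis using \<open>v \<in> t\<close> \<open>u v \<noteq> 0\<close> by (intro exI[of _ c]) (auto simp: c_def)
  qed
  then obtain c :: "nat \<Rightarrow> complex" and k0 where c: "(\<Sum>k\<le>n. c k *\<^sub>C K k) = 0" "k0 \<le> n" "c k0 \<noteq> 0"
    by blast
  define p where "p = (\<Sum>k\<le>n. monom (c k) k)"
  have "coeff p k0 = (\<Sum>k\<le>n. if k = k0 then c k else 0)"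
    by (simp add: p_def coeff_sum coeff_monom)
  also have "\<dots> = c k0" using c(2) by simp
  finally have "p \<noteq> 0" using c(3) by auto
  moreover have "peval p g = 0" using c(1) by (simp add: p_def peval_sum peval_monom K_def)
  ultimately show ?thesis using eig_from_poly[OF E] g by blast
qed

end


context ipair begin

lemma A1C: "A1 (C x) = - Xd (A2 x)"
  by (simp add: C_eq Xd_def lins A12)

lemma A2C: "A2 (C x) = - X (A1 x)"
proof -
  have "A2 (V1 (V2 y)) = V1 y" for y by (simp add: comm A2lin)
  then show ?thesis by (simp add: C_eq X_eq lins A12)
qed

lemma CX: "C (X x) = X x" using E1_char A1X A2X by blast

lemma A1V2: "A1 (V2 y) = V2 (A1 y) + Xd y" by (simp add: Xd_def)
lemma A2V1: "A2 (V1 y) = V1 (A2 y) + X y" by (simp add: X_eq)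

lemma X_clin: "clin_op X" by unfold_locales (simp_all add: X_lin)
lemma C_clin: "clin_op C" by unfold_locales (simp_all add: C_lin)

end

locale gpair = ipair +
  fixes f :: 'a and \<beta> :: complex
  assumes A1f: "A1 f = 0" and A2f: "A2 f = 0" and nf: "norm f = 1" and Xf: "X f = \<beta> *\<^sub>C f"
    and irr: "irreducible_pair V1 V2"
begin

lemma ff: "cinner f f = 1" using nf by (simp add: cinner_self)

lemma Xdf: "Xd f = cnj \<beta> *\<^sub>C f"
proof -
  have n1: "norm (Xd f) = cmod \<beta>" using normX[of f] by (simp add: Xf norm_scaleC nf)
  have c1: "cinner (Xd f) f = \<beta>"
  proof -
    have "cinner (Xd f) f = cnj (cinner f (Xd f))" by (rule cinner_commute)
    also have "cinner f (Xd f) = cinner (X f) f" by (rule X_adj[symmetric])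
    also have "\<dots> = cnj \<beta>" by (simp add: Xf cinner_scaleC_left ff)
    finally show ?thesis by simp
  qed
  have "(norm (Xd f - cnj \<beta> *\<^sub>C f))\<^sup>2 = (cmod \<beta>)\<^sup>2 + (cmod \<beta>)\<^sup>2 - 2 * Re (cnj \<beta> * \<beta>)"
    by (simp add: norm_diff_sq n1 norm_scaleC nf cinner_scaleC_right c1)
  also have "cnj \<beta> * \<beta> = complex_of_real ((cmod \<beta>)\<^sup>2)"
    by (metis complex_norm_square mult.commute of_real_power)
  finally have "(norm (Xd f - cnj \<beta> *\<^sub>C f))\<^sup>2 = 0" by simp
  then show ?thesis by simp
qed

definition e :: "nat \<Rightarrow> nat \<Rightarrow> 'a" where "e m n = (V1 ^^ m) ((V2 ^^ n) f)"

lemma e00: "e 0 0 = f" by (simp add: e_def)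
lemma V1e: "V1 (e m n) = e (Suc m) n" by (simp add: e_def)
lemma V2_pow_comm: "V2 ((V1 ^^ m) y) = (V1 ^^ m) (V2 y)"
  by (induction m) (simp_all add: comm[symmetric])
lemma V2e: "V2 (e m n) = e m (Suc n)" by (simp add: e_def V2_pow_comm)
lemma A1e_Suc: "A1 (e (Suc m) n) = e m n" by (simp add: e_def A1lin)
lemma A2e_Suc: "A2 (e m (Suc n)) = e m n"
  by (metis A2lin(6) V2e)

lemma Xd_e0: "Xd (e 0 (Suc n)) = 0"
  by (metis V2e XdV2)
lemma X_e0: "X (e (Suc m) 0) = 0"
  by (metis V1e XV1)

lemma A1e0: "A1 (e 0 (Suc n)) = cnj \<beta> *\<^sub>C e 0 n"
proof (induction n)
  case 0
  have "A1 (e 0 (Suc 0)) = V2 (A1 f) + Xd f" by (metis A1V2 V2e e00)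
  then show ?case by (simp add: A1f Xdf e00 V2lin)
next
  case (Suc n)
  have "A1 (e 0 (Suc (Suc n))) = V2 (A1 (e 0 (Suc n))) + Xd (e 0 (Suc n))" by (metis A1V2 V2e)
  then show ?case by (simp add: Suc Xd_e0 V2lin V2e)
qed

lemma A2e0: "A2 (e (Suc m) 0) = \<beta> *\<^sub>C e m 0"
proof (induction m)
  case 0
  have "A2 (e (Suc 0) 0) = V1 (A2 f) + X f" by (metis A2V1 V1e e00)
  then show ?case by (simp add: A2f Xf e00 V1lin)
next
  case (Suc m)
  have "A2 (e (Suc (Suc m)) 0) = V1 (A2 (e (Suc m) 0)) + X (e (Suc m) 0)" by (metis A2V1 V1e)
  then show ?case by (simp add: Suc X_e0 V1lin V1e)
qed

lemma A1e00: "A1 (e 0 0) = 0" by (simp add: e00 A1f)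
lemma A2e00: "A2 (e 0 0) = 0" by (simp add: e00 A2f)

lemma cinner_f_e: "cinner f (e m n) = (if m = 0 \<and> n = 0 then 1 else 0)"
proof (cases m)
  case 0
  then show ?thesis
  proof (cases n)
    case 0 then show ?thesis using \<open>m = 0\<close> by (simp add: e00 ff)
  next
    case (Suc k)
    then have "cinner f (e m n) = cinner (A2 f) (e 0 k)" using \<open>m = 0\<close> by (metis V2e a2')
    then show ?thesis using Suc by (simp add: A2f)
  qed
next
  case (Suc k)
  then have "cinner f (e m n) = cinner (A1 f) (e k n)" by (metis V1e a1')
  then show ?thesis using Suc by (simp add: A1f)
qed

end


lemma scaleC_bl: "bounded_linear (\<lambda>x::'a::complex_inner. c *\<^sub>C x)"
proof (rule bounded_linear_intro[where K="cmod c"])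
  show "c *\<^sub>C (x + y) = c *\<^sub>C x + c *\<^sub>C y" for x y by (rule scaleC_add_right)
  show "c *\<^sub>C (r *\<^sub>R x) = r *\<^sub>R (c *\<^sub>C x)" for r x by (simp add: scaleR_scaleC mult.commute)
  show "norm (c *\<^sub>C x) \<le> norm x * cmod c" for x by (simp add: norm_scaleC mult.commute)
qed

lemma closure_csubspace:
  fixes S :: "'a::complex_inner set"
  assumes S: "cvs.subspace S"
  shows "cvs.subspace (closure S)"
  unfolding cvs.subspace_def
proof (intro conjI ballI allI)
  show "0 \<in> closure S" using cvs.subspace_0[OF S] closure_subset by blast
next
  fix x y assume x: "x \<in> closure S" and y: "y \<in> closure S"
  obtain a where a: "\<forall>n. a n \<in> S" "a \<longlonglongrightarrow> x" using x closure_sequential by blast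
  obtain b where b: "\<forall>n. b n \<in> S" "b \<longlonglongrightarrow> y" using y closure_sequential by blast
  have h: "(\<forall>n. a n + b n \<in> S) \<and> (\<lambda>n. a n + b n) \<longlonglongrightarrow> x + y"
    using a b cvs.subspace_add[OF S] by (auto intro: tendsto_add)
  show "x + y \<in> closure S" unfolding closure_sequential by (rule exI[of _ "\<lambda>n. a n + b n"], rule h)
next
  fix c x assume x: "x \<in> closure S"
  obtain a where a: "\<forall>n. a n \<in> S" "a \<longlonglongrightarrow> x" using x closure_sequential by blast
  have h: "(\<forall>n. c *\<^sub>C a n \<in> S) \<and> (\<lambda>n. c *\<^sub>C a n) \<longlonglongrightarrow> c *\<^sub>C x"
    using a cvs.subspace_scale[OF S] bounded_linear.tendsto[OF scaleC_bl a(2)] by blast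
  show "c *\<^sub>C x \<in> closure S" unfolding closure_sequential by (rule exI[of _ "\<lambda>n. c *\<^sub>C a n"], rule h)
qed

lemma span_image_sub:
  fixes T :: "'a::complex_inner \<Rightarrow> 'a"
  assumes lin: "\<And>x y. T (x + y) = T x + T y" "\<And>c x. T (c *\<^sub>C x) = c *\<^sub>C T x"
    and G: "\<And>g. g \<in> G \<Longrightarrow> T g \<in> cvs.span G"
  shows "x \<in> cvs.span G \<Longrightarrow> T x \<in> cvs.span G"
proof (induction rule: cvs.span_induct)
  case step
  show ?case using G step by simp
next
  case base
  have T0: "T 0 = 0" by (metis add_cancel_right_right lin(1))
  show ?case
    by (rule cvs.subspaceI) (simp_all add: T0 lin cvs.span_add cvs.span_scale cvs.span_zero)
qed

lemma closure_inv:
  fixes T :: "'a::complex_inner \<Rightarrow> 'a"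
  assumes bl: "bounded_linear T" and sub: "\<And>x. x \<in> S \<Longrightarrow> T x \<in> S"
  shows "T ` closure S \<subseteq> closure S"
  by (rule image_closure_subset[OF linear_continuous_on[OF bl] closed_closure])
     (use sub closure_subset in blast)

context gpair begin

definition G where "G = range (\<lambda>(m, n). e m n)"
definition M where "M = closure (cvs.span G)"

lemma eG: "e m n \<in> G" unfolding G_def by (metis case_prod_conv rangeI)

lemma G_cases: "g \<in> G \<Longrightarrow> \<exists>m n. g = e m n" unfolding G_def by auto

lemma G_all: "(\<And>m n. T (e m n) \<in> cvs.span G) \<Longrightarrow> g \<in> G \<Longrightarrow> T g \<in> cvs.span G"
  using G_cases by blast

lemma eS: "e m n \<in> cvs.span G" by (rule cvs.span_base[OF eG])

lemma bl_V1: "bounded_linear V1" by (rule iso_bl[OF iso1])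
lemma bl_V2: "bounded_linear V2" by (rule iso_bl[OF iso2])
lemma bl_A1: "bounded_linear A1" by (rule adj_iso_bl[OF iso1])
lemma bl_A2: "bounded_linear A2" by (rule adj_iso_bl[OF iso2])

lemma A1e_span: "A1 (e m n) \<in> cvs.span G"
proof (cases m)
  case 0
  then show ?thesis
  proof (cases n)
    case 0 then show ?thesis using \<open>m = 0\<close> by (simp add: A1e00 cvs.span_zero)
  next
    case (Suc k) then show ?thesis using \<open>m = 0\<close> by (simp add: A1e0 cvs.span_scale eS)
  qed
next
  case (Suc k) then show ?thesis by (simp add: A1e_Suc eS)
qed

lemma A2e_span: "A2 (e m n) \<in> cvs.span G"
proof (cases n)
  case 0
  then show ?thesis
  proof (cases m)
    case 0 then show ?thesis using \<open>n = 0\<close> by (simp add: A2e00 cvs.span_zero)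
  next
    case (Suc k) then show ?thesis using \<open>n = 0\<close> by (simp add: A2e0 cvs.span_scale eS)
  qed
next
  case (Suc k) then show ?thesis by (simp add: A2e_Suc eS)
qed

lemma M_UNIV: "M = UNIV"
proof -
  have sub: "cvs.subspace M" unfolding M_def by (rule closure_csubspace) simp
  have inv: "T ` M \<subseteq> M" if "bounded_linear T" "\<And>x y. T (x + y) = T x + T y"
     "\<And>c x. T (c *\<^sub>C x) = c *\<^sub>C T x" "\<And>g. g \<in> G \<Longrightarrow> T g \<in> cvs.span G" for T
    unfolding M_def by (rule closure_inv[OF that(1)]) (rule span_image_sub[OF that(2,3,4)])
  have "V1 ` M \<subseteq> M" by (rule inv[OF bl_V1 V1lin(1,2)]) (rule G_all, simp add: V1e eS)
  moreover have "V2 ` M \<subseteq> M" by (rule inv[OF bl_V2 V2lin(1,2)]) (rule G_all, simp add: V2e eS)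
  moreover have "A1 ` M \<subseteq> M" by (rule inv[OF bl_A1 A1lin(1,2)]) (rule G_all, rule A1e_span)
  moreover have "A2 ` M \<subseteq> M" by (rule inv[OF bl_A2 A2lin(1,2)]) (rule G_all, rule A2e_span)
  moreover have "closed M" by (simp add: M_def)
  moreover have "closed M \<and> cvs.subspace M \<and> V1 ` M \<subseteq> M \<and> V2 ` M \<subseteq> M \<and> A1 ` M \<subseteq> M \<and> A2 ` M \<subseteq> M
      \<longrightarrow> M = {0} \<or> M = UNIV"
    using irr unfolding irreducible_pair_def by (rule spec)
  ultimately have "M = {0} \<or> M = UNIV" using sub by blast
  moreover have "f \<in> M" unfolding M_def using eS[of 0 0] closure_subset by (auto simp: e00)
  moreover have "f \<noteq> 0" using nf by auto
  ultimately show ?thesis by auto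
qed

lemma orth_zero:
  assumes "\<And>m n. cinner (e m n) w = 0"
  shows "w = 0"
proof -
  define Z where "Z = {x. cinner x w = 0}"
  have "closed Z" unfolding Z_def
    by (rule closed_Collect_eq) (simp_all add: linear_continuous_on[OF bounded_linear_cinner_left])
  moreover have "cvs.span G \<subseteq> Z"
  proof
    fix x assume "x \<in> cvs.span G"
    then show "x \<in> Z"
    proof (induction rule: cvs.span_induct)
      case step show ?case using assms step by (auto simp: G_def Z_def)
    next
      case base show ?case
        by (rule cvs.subspaceI) (simp_all add: Z_def cinner_add_left cinner_scaleC_left)
    qed
  qed
  ultimately have "M \<subseteq> Z" unfolding M_def by (rule closure_minimal[rotated])
  then have "w \<in> Z" using M_UNIV by auto
  then show ?thesis by (simp add: Z_def cinner_eq_zero_iff)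
qed

end


definition Qop :: "(real \<times> 'a::complex_inner) list \<Rightarrow> 'a \<Rightarrow> 'a" where
  "Qop L y = (\<Sum>p\<leftarrow>L. (complex_of_real (fst p) * cinner (snd p) y) *\<^sub>C snd p)"

lemma Qop_Nil[simp]: "Qop [] y = 0" by (simp add: Qop_def)
lemma Qop_Cons[simp]: "Qop ((\<mu>, v) # L) y = (complex_of_real \<mu> * cinner v y) *\<^sub>C v + Qop L y"
  by (simp add: Qop_def)

lemma Qop_adj: "cinner (Qop L x) y = cinner x (Qop L y)"
proof (induction L)
  case Nil then show ?case by simp
next
  case (Cons p L)
  obtain \<mu> v where p: "p = (\<mu>, v)" by (cases p)
  have "cnj (cinner v x) = cinner x v" by (metis cinner_commute)
  then show ?case using Cons
    by (simp add: p cinner_add_left cinner_add_right cinner_scaleC_left cinner_scaleC_right mult.commute mult.left_commute)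
qed

lemma Qop_add: "Qop L (x + y) = Qop L x + Qop L y"
  by (induction L) (auto simp: cinner_add_right scaleC_add_left algebra_simps)

lemma Qop_scale: "Qop L (c *\<^sub>C x) = c *\<^sub>C Qop L x"
  by (induction L) (auto simp: cinner_scaleC_right scaleC_add_right mult.commute mult.left_commute)

lemma Qop_diff: "Qop L (x - y) = Qop L x - Qop L y"
proof -
  have m: "Qop L (- y) = - Qop L y" by (metis Qop_scale scaleC_minus1)
  show ?thesis by (simp only: diff_conv_add_uminus Qop_add m)
qed

lemma Qop_span: "Qop L y \<in> cvs.span (snd ` set L)"
proof (induction L)
  case Nil then show ?case by (simp add: cvs.span_zero)
next
  case (Cons p L)
  obtain \<mu> v where p: "p = (\<mu>, v)" by (cases p)
  have "Qop L y \<in> cvs.span (snd ` set (p # L))"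
    using Cons cvs.span_mono[of "snd ` set L" "snd ` set (p # L)"] by auto
  moreover have "v \<in> cvs.span (snd ` set (p # L))" by (rule cvs.span_base) (simp add: p)
  ultimately show ?case by (simp add: p cvs.span_add cvs.span_scale)
qed

context gpair begin

lemma C_V1V2: "C (V1 (V2 y)) = 0"
proof -
  have a: "A1 (V1 (V2 y)) = V2 y" by (simp add: A1lin)
  have b: "A2 (V1 (V2 y)) = V1 y" by (simp add: comm A2lin)
  have c: "A1 (A2 (V1 (V2 y))) = y" by (simp only: b A1lin(6))
  show ?thesis unfolding C_eq a b c by (simp add: comm A1lin)
qed

lemma e10: "e (Suc 0) 0 = V1 f" by (simp add: e_def)
lemma e01: "e 0 (Suc 0) = V2 f" by (simp add: e_def)

lemma C_e_high: "2 \<le> m + n \<Longrightarrow> C (e m n) = 0"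
proof (cases m)
  case 0
  assume h: "2 \<le> m + n"
  then obtain k where n: "n = Suc (Suc k)" using 0 by (metis add_0 le_iff_add add_2_eq_Suc)
  have a1: "A1 (e 0 (Suc (Suc k))) = cnj \<beta> *\<^sub>C e 0 (Suc k)" by (rule A1e0)
  have a2: "A2 (e 0 (Suc (Suc k))) = e 0 (Suc k)" by (rule A2e_Suc)
  have a12: "A1 (A2 (e 0 (Suc (Suc k)))) = cnj \<beta> *\<^sub>C e 0 k" by (simp add: a2 A1e0)
  have "C (e 0 (Suc (Suc k))) = e 0 (Suc (Suc k)) - cnj \<beta> *\<^sub>C e (Suc 0) (Suc k) - e 0 (Suc (Suc k))
        + cnj \<beta> *\<^sub>C e (Suc 0) (Suc k)"
    unfolding C_eq a1 a2 by (simp add: lins V1e V2e A1e0)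
  then show ?thesis using 0 n by simp
next
  case (Suc m')
  assume h: "2 \<le> m + n"
  show ?thesis
  proof (cases n)
    case (Suc n')
    have "e m n = V1 (V2 (e m' n'))" using \<open>m = Suc m'\<close> Suc by (simp add: V1e V2e)
    then show ?thesis by (simp add: C_V1V2)
  next
    case 0
    then obtain k where m: "m = Suc (Suc k)" using h \<open>m = Suc m'\<close> by (metis add_0_right Suc_le_mono add_2_eq_Suc le_iff_add nat.inject)
    have a1: "A1 (e (Suc (Suc k)) 0) = e (Suc k) 0" by (rule A1e_Suc)
    have a2: "A2 (e (Suc (Suc k)) 0) = \<beta> *\<^sub>C e (Suc k) 0" by (rule A2e0)
    have a12: "A1 (A2 (e (Suc (Suc k)) 0)) = \<beta> *\<^sub>C e k 0" by (simp add: a2 A1lin A1e_Suc)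
    have "C (e (Suc (Suc k)) 0) = e (Suc (Suc k)) 0 - e (Suc (Suc k)) 0 - \<beta> *\<^sub>C e (Suc k) (Suc 0)
        + \<beta> *\<^sub>C e (Suc k) (Suc 0)"
      unfolding C_eq a1 a2 by (simp add: lins V1e V2e A1e_Suc)
    then show ?thesis using 0 m by simp
  qed
qed

lemma C_e00: "C (e 0 0) = e 0 0" by (simp add: C_eq e00 A1f A2f lins)

lemma C_e10: "C (e (Suc 0) 0) = - \<beta> *\<^sub>C e 0 (Suc 0)"
proof -
  have a1: "A1 (e (Suc 0) 0) = f" using A1e_Suc[of 0 0] by (simp add: e00)
  have a2: "A2 (e (Suc 0) 0) = \<beta> *\<^sub>C f" using A2e0[of 0] by (simp add: e00)
  show ?thesis unfolding C_eq a1 a2 by (simp add: lins A1f e10 e01 cvs.scale_minus_left)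
qed

lemma C_e01: "C (e 0 (Suc 0)) = - cnj \<beta> *\<^sub>C e (Suc 0) 0"
proof -
  have a1: "A1 (e 0 (Suc 0)) = cnj \<beta> *\<^sub>C f" using A1e0[of 0] by (simp add: e00)
  have a2: "A2 (e 0 (Suc 0)) = f" using A2e_Suc[of 0 0] by (simp add: e00)
  show ?thesis unfolding C_eq a1 a2 by (simp add: lins A1f e10 e01 cvs.scale_minus_left)
qed

lemma cinner_f_e': "cinner (e m n) f = (if m = 0 \<and> n = 0 then 1 else 0)"
  by (metis cinner_commute cinner_f_e complex_cnj_one complex_cnj_zero)

lemma cinner_e10_e: "cinner (e (Suc 0) 0) (e m n) = cinner f (A1 (e m n))"
  by (simp add: e10 a1)
lemma cinner_e01_e: "cinner (e 0 (Suc 0)) (e m n) = cinner f (A2 (e m n))"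
  by (simp add: e01 a2)

lemma ortho_high:
  assumes "2 \<le> m + n"
  shows "cinner f (e m n) = 0" "cinner (e (Suc 0) 0) (e m n) = 0" "cinner (e 0 (Suc 0)) (e m n) = 0"
proof -
  show "cinner f (e m n) = 0" using assms by (auto simp: cinner_f_e)
  show "cinner (e (Suc 0) 0) (e m n) = 0"
  proof (cases m)
    case 0
    then obtain k where "n = Suc k" "1 \<le> k" using assms by (cases n) auto
    then show ?thesis using 0 by (simp add: cinner_e10_e A1e0 cinner_scaleC_right cinner_f_e)
  next
    case (Suc k)
    then show ?thesis using assms by (auto simp: cinner_e10_e A1e_Suc cinner_f_e)
  qed
  show "cinner (e 0 (Suc 0)) (e m n) = 0"
  proof (cases n)
    case 0
    then obtain k where "m = Suc k" "1 \<le> k" using assms by (cases m) auto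
    then show ?thesis using 0 by (simp add: cinner_e01_e A2e0 cinner_scaleC_right cinner_f_e)
  next
    case (Suc k)
    then show ?thesis using assms by (auto simp: cinner_e01_e A2e_Suc cinner_f_e)
  qed
qed

lemma C_eq_Q:
  assumes "\<And>m n. C (e m n) = Qop L (e m n)"
  shows "C y = Qop L y"
proof -
  have "C y - Qop L y = 0"
  proof (rule orth_zero)
    fix m n
    have "cinner (e m n) (C y - Qop L y) = cinner (C (e m n)) y - cinner (Qop L (e m n)) y"
      by (simp add: cinner_diff_right C_adj Qop_adj)
    then show "cinner (e m n) (C y - Qop L y) = 0" by (simp add: assms)
  qed
  then show ?thesis by simp
qed

lemma e_inner:
  "cinner (e (Suc 0) 0) (e (Suc 0) 0) = 1" "cinner (e 0 (Suc 0)) (e 0 (Suc 0)) = 1"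
  "cinner (e (Suc 0) 0) (e 0 (Suc 0)) = cnj \<beta>" "cinner (e 0 (Suc 0)) (e (Suc 0) 0) = \<beta>"
  "cinner f (e (Suc 0) 0) = 0" "cinner f (e 0 (Suc 0)) = 0" "cinner (e (Suc 0) 0) f = 0" "cinner (e 0 (Suc 0)) f = 0"
  by (simp_all add: cinner_e10_e cinner_e01_e A1e_Suc[of 0 0, simplified] A2e_Suc[of 0 0, simplified]
      A1e0[of 0, simplified] A2e0[of 0, simplified] cinner_scaleC_right cinner_f_e cinner_f_e' e00 ff)

lemma beta_le1: "cmod \<beta> \<le> 1"
proof -
  have "cmod \<beta> = cmod (cinner (e 0 (Suc 0)) (e (Suc 0) 0))" by (simp add: e_inner)
  also have "\<dots> \<le> norm (e 0 (Suc 0)) * norm (e (Suc 0) 0)" by (rule cinner_cs)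
  also have "\<dots> = 1" by (simp add: e10 e01 iso_norm[OF iso1] iso_norm[OF iso2] nf)
  finally show ?thesis .
qed

end


context gpair begin

lemma e_cases:
  assumes "P 0 0" "P (Suc 0) 0" "P 0 (Suc 0)" "\<And>m n. 2 \<le> m + n \<Longrightarrow> P m n"
  shows "P m n"
proof (cases "2 \<le> m + n")
  case True then show ?thesis using assms(4) by blast
next
  case False
  then have "(m = 0 \<and> n = 0) \<or> (m = Suc 0 \<and> n = 0) \<or> (m = 0 \<and> n = Suc 0)" by auto
  then show ?thesis using assms(1-3) by auto
qed

lemma Q_high:
  assumes "\<And>\<mu> v. (\<mu>, v) \<in> set L \<Longrightarrow> cinner v (e m n) = 0"
  shows "Qop L (e m n) = 0"
  using assms
proof (induction L)
  case Nil then show ?case by simp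
next
  case (Cons p L)
  obtain a b where p: "p = (a, b)" by (cases p)
  have "cinner b (e m n) = 0" using Cons.prems p by auto
  moreover have "Qop L (e m n) = 0" by (rule Cons.IH) (use Cons.prems in auto)
  ultimately show ?case by (simp add: p)
qed

lemma C_f: "C f = f" using C_e00 by (simp add: e00)
lemma ne10: "norm (e (Suc 0) 0) = 1" by (simp add: e10 iso_norm[OF iso1] nf)
lemma ne01: "norm (e 0 (Suc 0)) = 1" by (simp add: e01 iso_norm[OF iso2] nf)

lemma op_rank_le:
  assumes "\<And>y. C y = Qop L y"
  shows "op_rank C \<le> length L"
proof -
  have "range C \<subseteq> cvs.span (snd ` set L)" using assms Qop_span by auto
  then have "op_rank C \<le> card (snd ` set L)" unfolding op_rank_def by (rule cvs.dim_le_card) simp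
  also have "\<dots> \<le> length L" by (metis card_image_le card_length finite_set le_trans)
  finally show ?thesis .
qed

lemma rank_beta0:
  assumes "\<beta> = 0" shows "op_rank C \<le> 1"
proof -
  have "C y = Qop [(1, f)] y" for y
  proof (rule C_eq_Q)
    fix m n show "C (e m n) = Qop [(1, f)] (e m n)"
    proof (induction m n rule: e_cases)
      case 1 show ?case by (simp add: C_f e00 ff)
    next
      case 2 show ?case by (simp add: C_e10 assms e_inner)
    next
      case 3 show ?case by (simp add: C_e01 assms e_inner)
    next
      case (4 m n) then show ?case by (simp add: C_e_high ortho_high)
    qed
  qed
  then show ?thesis using op_rank_le[of "[(1, f)]"] by simp
qed

lemma rank_beta1:
  assumes "cmod \<beta> = 1" shows "op_rank C \<le> 2"
proof -
  have bb: "cnj \<beta> * \<beta> = 1"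
    using assms by (metis complex_norm_square mult.commute of_real_1 power_one)
  have "(norm (e (Suc 0) 0 - \<beta> *\<^sub>C e 0 (Suc 0)))\<^sup>2 = 1 + 1 - 2 * Re (\<beta> * cnj \<beta>)"
    by (simp add: norm_diff_sq norm_scaleC assms cinner_scaleC_right e_inner ne10 ne01)
  also have "\<beta> * cnj \<beta> = 1" using bb by (simp add: mult.commute)
  finally have e10eq: "e (Suc 0) 0 = \<beta> *\<^sub>C e 0 (Suc 0)" by simp
  define L where "L = [(1::real, f), (-1, e 0 (Suc 0))]"
  have "C y = Qop L y" for y
  proof (rule C_eq_Q)
    fix m n show "C (e m n) = Qop L (e m n)"
    proof (induction m n rule: e_cases)
      case 1 show ?case by (simp add: L_def C_f e00 ff e_inner)
    next
      case 2 show ?case by (simp add: L_def C_e10 e_inner cvs.scale_minus_left)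
    next
      case 3
      have "C (e 0 (Suc 0)) = - e 0 (Suc 0)"
        by (simp add: C_e01 e10eq bb cvs.scale_minus_left)
      then show ?case by (simp add: L_def e_inner cvs.scale_minus_left)
    next
      case (4 m n) then show ?case by (simp add: L_def C_e_high ortho_high)
    qed
  qed
  then show ?thesis using op_rank_le[of L] by (simp add: L_def)
qed

end


locale gpair_gen = gpair +
  assumes rpos: "0 < cmod \<beta>" and rlt1: "cmod \<beta> < 1"
begin

definition r where "r = cmod \<beta>"
definition \<omega> where "\<omega> = \<beta> / complex_of_real r"

lemma r_pos: "0 < r" and r_lt1: "r < 1" using rpos rlt1 by (simp_all add: r_def)

lemma beta_r: "\<beta> = complex_of_real r * \<omega>"
  using r_pos by (simp add: \<omega>_def)

lemma om_norm: "cnj \<omega> * \<omega> = 1" "\<omega> * cnj \<omega> = 1"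
proof -
  have "cmod \<omega> = 1" using r_pos by (simp add: \<omega>_def norm_divide r_def)
  then show "\<omega> * cnj \<omega> = 1" using complex_norm_square[of \<omega>] by simp
  then show "cnj \<omega> * \<omega> = 1" by (metis mult.commute)
qed

lemma cb: "cnj \<omega> * \<beta> = complex_of_real r" "\<omega> * cnj \<beta> = complex_of_real r"
  "cnj \<beta> = complex_of_real r * cnj \<omega>"
proof -
  show "cnj \<omega> * \<beta> = complex_of_real r"
    using beta_r om_norm by algebra
  show c: "cnj \<beta> = complex_of_real r * cnj \<omega>" by (subst beta_r) simp
  show "\<omega> * cnj \<beta> = complex_of_real r" using c om_norm by algebra
qed

abbreviation "a \<equiv> e 0 (Suc 0)"
abbreviation "b \<equiv> e (Suc 0) 0"

definition w1 where "w1 = a - cnj \<omega> *\<^sub>C b"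
definition w2 where "w2 = a + cnj \<omega> *\<^sub>C b"

lemma Cw1: "C w1 = complex_of_real r *\<^sub>C w1"
proof -
  have "C w1 = (cnj \<omega> * \<beta>) *\<^sub>C a - cnj \<beta> *\<^sub>C b"
    by (simp add: w1_def C_lin C_e10 C_e01 cvs.scale_minus_left)
  also have "\<dots> = complex_of_real r *\<^sub>C w1"
    by (simp add: w1_def cb cvs.scale_right_diff_distrib)
  finally show ?thesis .
qed

lemma Cw2: "C w2 = - complex_of_real r *\<^sub>C w2"
proof -
  have "C w2 = - (cnj \<omega> * \<beta>) *\<^sub>C a - cnj \<beta> *\<^sub>C b"
    by (simp add: w2_def C_lin C_e10 C_e01 cvs.scale_minus_left)
  also have "\<dots> = - complex_of_real r *\<^sub>C w2"
    by (simp add: w2_def cb cvs.scale_minus_left scaleC_add_right)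
  finally show ?thesis .
qed

lemmas inner_unf = cinner_diff_left cinner_diff_right cinner_add_left cinner_add_right
  cinner_scaleC_left cinner_scaleC_right e_inner complex_cnj_cnj

lemma winner:
  "cinner w1 w1 = 2 - 2 * complex_of_real r" "cinner w2 w2 = 2 + 2 * complex_of_real r"
  "cinner w1 w2 = 0" "cinner w2 w1 = 0" "cinner f w1 = 0" "cinner f w2 = 0"
  "cinner w1 f = 0" "cinner w2 f = 0"
  unfolding w1_def w2_def
         apply (simp only: inner_unf)
  using beta_r cb(3) om_norm(2) apply algebra
        apply (simp only: inner_unf)
  using beta_r cb(3) om_norm(2) apply algebra
       apply (simp only: inner_unf)
  using beta_r cb(3) om_norm(2) apply algebra
      apply (simp only: inner_unf)
  using beta_r cb(3) om_norm(2) apply algebra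
  by (simp_all add: inner_unf)

definition s1 where "s1 = sqrt (2 - 2 * r)"
definition s2 where "s2 = sqrt (2 + 2 * r)"
lemma s_pos: "0 < s1" "0 < s2" using r_pos r_lt1 by (simp_all add: s1_def s2_def)
lemma s_sq: "s1 * s1 = 2 - 2 * r" "s2 * s2 = 2 + 2 * r" using r_pos r_lt1 by (simp_all add: s1_def s2_def)

definition u1 where "u1 = complex_of_real (1 / s1) *\<^sub>C w1"
definition u2 where "u2 = complex_of_real (1 / s2) *\<^sub>C w2"

lemma s_sq_c: "complex_of_real s1 * complex_of_real s1 = 2 - 2 * complex_of_real r"
  "complex_of_real s2 * complex_of_real s2 = 2 + 2 * complex_of_real r"
  by (simp_all only: of_real_mult[symmetric] s_sq of_real_diff of_real_add of_real_mult of_real_numeral)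

lemma uinner:
  "cinner u1 u1 = 1" "cinner u2 u2 = 1" "cinner u1 u2 = 0" "cinner u2 u1 = 0"
  "cinner f u1 = 0" "cinner f u2 = 0" "cinner u1 f = 0" "cinner u2 f = 0"
proof -
  have "cinner u1 u1 = complex_of_real (1 / s1) * (complex_of_real (1 / s1) * (complex_of_real s1 * complex_of_real s1))"
    by (simp only: u1_def cinner_scaleC_left cinner_scaleC_right winner s_sq_c complex_cnj_complex_of_real)
  also have "\<dots> = 1" using s_pos by (simp add: field_simps)
  finally show "cinner u1 u1 = 1" .
  have "cinner u2 u2 = complex_of_real (1 / s2) * (complex_of_real (1 / s2) * (complex_of_real s2 * complex_of_real s2))"
    by (simp only: u2_def cinner_scaleC_left cinner_scaleC_right winner s_sq_c complex_cnj_complex_of_real)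
  also have "\<dots> = 1" using s_pos by (simp add: field_simps)
  finally show "cinner u2 u2 = 1" .
qed (simp_all add: u1_def u2_def cinner_scaleC_left cinner_scaleC_right winner)

lemma Cu: "C u1 = complex_of_real r *\<^sub>C u1" "C u2 = - complex_of_real r *\<^sub>C u2"
  by (simp_all add: u1_def u2_def C_lin Cw1 Cw2 mult.commute cvs.scale_minus_left)

lemma w_u: "w1 = complex_of_real s1 *\<^sub>C u1" "w2 = complex_of_real s2 *\<^sub>C u2"
  using s_pos by (simp_all add: u1_def u2_def)

lemma two_scale: "(2::complex) *\<^sub>C x = x + x"
  by (metis one_add_one scaleC_add_left scaleC_one)

lemma a_comb: "a = complex_of_real (s1 / 2) *\<^sub>C u1 + complex_of_real (s2 / 2) *\<^sub>C u2"
proof -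
  have "w1 + w2 = (2::complex) *\<^sub>C a" by (simp add: w1_def w2_def two_scale)
  then have "a = (1/2) *\<^sub>C (w1 + w2)" by simp
  then show ?thesis by (simp add: w_u scaleC_add_right)
qed

lemma b_comb: "b = (\<omega> * complex_of_real (s2 / 2)) *\<^sub>C u2 - (\<omega> * complex_of_real (s1 / 2)) *\<^sub>C u1"
proof -
  have "w2 - w1 = (2 * cnj \<omega>) *\<^sub>C b" by (simp add: w1_def w2_def two_scale flip: cvs.scale_scale)
  then have "(\<omega> / 2) *\<^sub>C (w2 - w1) = b" by (simp add: mult.assoc[symmetric] om_norm)
  then show ?thesis by (simp add: w_u cvs.scale_right_diff_distrib mult.commute)
qed

definition LL where "LL = [(1::real, f), (r, u1), (- r, u2)]"
abbreviation "Q \<equiv> Qop LL"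

lemma Q_basis: "Q f = f" "Q u1 = complex_of_real r *\<^sub>C u1" "Q u2 = - complex_of_real r *\<^sub>C u2"
  by (simp_all add: LL_def ff uinner cvs.scale_minus_left)

lemma Q_expand: "Q y = cinner f y *\<^sub>C f + (complex_of_real r * cinner u1 y) *\<^sub>C u1
    - (complex_of_real r * cinner u2 y) *\<^sub>C u2"
  by (simp add: LL_def cvs.scale_minus_left)

lemma CQ_comb: "C (p *\<^sub>C u1 + q *\<^sub>C u2) = Q (p *\<^sub>C u1 + q *\<^sub>C u2)"
  by (simp add: C_lin Qop_add Qop_scale Cu Q_basis)

lemma CQ_comb': "C (p *\<^sub>C u2 - q *\<^sub>C u1) = Q (p *\<^sub>C u2 - q *\<^sub>C u1)"
  by (simp add: C_lin Qop_diff Qop_scale Cu Q_basis)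

lemma u_high: "2 \<le> m + n \<Longrightarrow> cinner u1 (e m n) = 0 \<and> cinner u2 (e m n) = 0"
  by (simp add: u1_def u2_def w1_def w2_def cinner_simps ortho_high)

lemma C_is_Q: "C y = Q y"
proof (rule C_eq_Q)
  fix m n show "C (e m n) = Q (e m n)"
  proof (induction m n rule: e_cases)
    case 1 show ?case by (simp add: C_f e00 Q_basis)
  next
    case 2
    from CQ_comb'[of "\<omega> * complex_of_real (s2 / 2)" "\<omega> * complex_of_real (s1 / 2)"]
    show ?case by (simp only: b_comb[symmetric])
  next
    case 3
    from CQ_comb[of "complex_of_real (s1 / 2)" "complex_of_real (s2 / 2)"]
    show ?case by (simp only: a_comb[symmetric])
  next
    case (4 m n)
    then have "Q (e m n) = 0" by (intro Q_high) (auto simp: LL_def ortho_high u_high)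
    then show ?case using 4 by (simp add: C_e_high)
  qed
qed

end


lemma cancel_scal: "(p::complex) * z = q * z \<Longrightarrow> p \<noteq> q \<Longrightarrow> z = 0"
  by simp

context gpair_gen begin

definition Dg :: "real \<Rightarrow> real \<Rightarrow> real \<Rightarrow> 'a \<Rightarrow> 'a" where
  "Dg p q s = Qop [(p, f), (q, u1), (s, u2)]"

lemma Dg_expand: "Dg p q s y = (complex_of_real p * cinner f y) *\<^sub>C f + (complex_of_real q * cinner u1 y) *\<^sub>C u1
   + (complex_of_real s * cinner u2 y) *\<^sub>C u2"
  by (simp add: Dg_def add.assoc)

lemma Dg_inner: "cinner f (Dg p q s y) = complex_of_real p * cinner f y"
  "cinner u1 (Dg p q s y) = complex_of_real q * cinner u1 y"
  "cinner u2 (Dg p q s y) = complex_of_real s * cinner u2 y"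
  by (simp_all add: Dg_expand cinner_add_right cinner_scaleC_right ff uinner)

lemma Q_Dg: "Q y = Dg 1 r (- r) y" by (simp add: Dg_def LL_def)

lemma C_Dg: "C y = Dg 1 r (- r) y" by (simp add: C_is_Q Q_Dg)

lemma Dg_eq: assumes "cinner f x = cinner f y" "cinner u1 x = cinner u1 y" "cinner u2 x = cinner u2 y"
  shows "Dg p q s x = Dg p q s y"
  using assms by (simp add: Dg_expand)

lemma Dg_comp: "Dg p q s (Dg p' q' s' y) = Dg (p * p') (q * q') (s * s') y"
  unfolding Dg_expand[of p q s "Dg p' q' s' y"] Dg_inner by (simp add: Dg_expand mult.assoc)

lemma Dg_add: "Dg p q s x + Dg p' q' s' x = Dg (p + p') (q + q') (s + s') x"
  by (simp add: Dg_expand algebra_simps scaleC_add_left distrib_right)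

lemma Dg_scale: "complex_of_real c *\<^sub>C Dg p q s x = Dg (c * p) (c * q) (c * s) x"
  by (simp add: Dg_expand scaleC_add_right mult.assoc)

lemma Dg_lin: "Dg p q s (x + y) = Dg p q s x + Dg p q s y" "Dg p q s (c *\<^sub>C x) = c *\<^sub>C Dg p q s x"
  "Dg p q s (x - y) = Dg p q s x - Dg p q s y"
  by (simp_all add: Dg_def Qop_add Qop_scale Qop_diff)

lemma Dg_000: "Dg 0 0 0 x = 0" by (simp add: Dg_expand)

lemma Dg_adj: "cinner (Dg p q s x) y = cinner x (Dg p q s y)" unfolding Dg_def by (rule Qop_adj)

lemma r_ne: "complex_of_real r \<noteq> -1" "- complex_of_real r \<noteq> 1" "complex_of_real r \<noteq> 1"
  "- complex_of_real r \<noteq> -1"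
  using r_pos r_lt1 by (simp_all add: complex_eq_iff)

lemma E1_eq: "C x = x \<longleftrightarrow> x = cinner f x *\<^sub>C f"
proof
  assume Cx: "C x = x"
  have "cinner u1 x = cinner u1 (C x)" by (simp add: Cx)
  then have "complex_of_real r * cinner u1 x = 1 * cinner u1 x" by (simp add: C_Dg Dg_inner)
  then have z1: "cinner u1 x = 0" by (rule cancel_scal) (use r_ne in simp)
  have "cinner u2 x = cinner u2 (C x)" by (simp add: Cx)
  then have "complex_of_real (-r) * cinner u2 x = 1 * cinner u2 x" by (simp add: C_Dg Dg_inner)
  then have z2: "cinner u2 x = 0" by (rule cancel_scal) (use r_ne in simp)
  have "x = C x" by (simp add: Cx)
  also have "\<dots> = cinner f x *\<^sub>C f" by (simp add: C_Dg Dg_expand z1 z2)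
  finally show "x = cinner f x *\<^sub>C f" .
next
  assume "x = cinner f x *\<^sub>C f"
  then have "C x = cinner f x *\<^sub>C C f" by (metis C_lin(2))
  then show "C x = x" using \<open>x = cinner f x *\<^sub>C f\<close> by (simp add: C_f)
qed

lemma Em1: "C x = - x \<Longrightarrow> x = 0"
proof -
  assume Cx: "C x = - x"
  have "cinner f x = cinner f (C x)" by (simp add: C_Dg Dg_inner)
  then have "1 * cinner f x = (-1) * cinner f x" by (simp add: Cx cinner_minus_right)
  then have z0: "cinner f x = 0" by (rule cancel_scal) simp
  have "cinner u1 (C x) = complex_of_real r * cinner u1 x" by (simp add: C_Dg Dg_inner)
  then have "complex_of_real r * cinner u1 x = (-1) * cinner u1 x" by (simp add: Cx cinner_minus_right)
  then have z1: "cinner u1 x = 0" by (rule cancel_scal) (rule r_ne)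
  have "cinner u2 (C x) = complex_of_real (-r) * cinner u2 x" by (simp add: C_Dg Dg_inner)
  then have "complex_of_real (-r) * cinner u2 x = (-1) * cinner u2 x" by (simp add: Cx cinner_minus_right)
  then have z2: "cinner u2 x = 0" by (rule cancel_scal) (use r_ne in simp)
  have "- x = C x" by (simp add: Cx)
  also have "\<dots> = 0" by (simp add: C_Dg Dg_expand z0 z1 z2)
  finally show "x = 0" by simp
qed

end


lemma coef_zero: assumes "(\<mu>::real) \<noteq> 0" "b \<noteq> \<mu>"
  shows "(1 / (b - \<mu>) + 1 / \<mu>) * b - \<mu> * (1 / (b - \<mu>) + 1 / \<mu>) - b / \<mu> = 0"
proof -
  have h: "b - \<mu> \<noteq> 0" using assms by simp
  have e: "(1 / (b - \<mu>) + 1 / \<mu>) * b - \<mu> * (1 / (b - \<mu>) + 1 / \<mu>) = (1 / (b - \<mu>) + 1 / \<mu>) * (b - \<mu>)"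
    by (metis mult.commute right_diff_distrib)
  have d: "(1 / (b - \<mu>) + 1 / \<mu>) * (b - \<mu>) = 1 / (b - \<mu>) * (b - \<mu>) + 1 / \<mu> * (b - \<mu>)"
    by (rule distrib_right)
  have d1: "1 / (b - \<mu>) * (b - \<mu>) = 1" using h by simp
  have d2: "1 / \<mu> * (b - \<mu>) = b / \<mu> - 1" using assms(1) by (simp add: field_simps)
  show ?thesis using e d d1 d2 by simp
qed

lemma coef_zero2: assumes "(\<mu>::real) \<noteq> 0" "b \<noteq> \<mu>"
  shows "b * (1 / (b - \<mu>) + 1 / \<mu>) - 1 / \<mu> * b - \<mu> * (1 / (b - \<mu>) + 1 / \<mu>) = 0"
  using coef_zero[OF assms] by (simp add: mult.commute)

lemma grp: "(a::'b::ab_group_add) - b - (c - d) = a - b - c + d" by simp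

context gpair_gen begin

lemma Dg_diff: "Dg p q s x - Dg p' q' s' x = Dg (p - p') (q - q') (s - s') x"
  by (simp add: Dg_expand algebra_simps scaleC_add_left cvs.scale_left_diff_distrib left_diff_distrib)

lemma norm_u: "norm u1 = 1" "norm u2 = 1"
proof -
  have "complex_of_real ((norm u1)\<^sup>2) = 1" "complex_of_real ((norm u2)\<^sup>2) = 1"
    using uinner(1,2) cinner_self by metis+
  then have "(norm u1)\<^sup>2 = 1" "(norm u2)\<^sup>2 = 1" by (metis of_real_eq_1_iff)+
  then show "norm u1 = 1" "norm u2 = 1"
    using power2_eq_1_iff[of "norm u1"] power2_eq_1_iff[of "norm u2"] norm_ge_zero[of u1] norm_ge_zero[of u2] by auto
qed

lemma norm_term: assumes "norm v = 1" shows "norm ((complex_of_real p * cinner v y) *\<^sub>C v) \<le> norm y * \<bar>p\<bar>"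
proof -
  have "norm ((complex_of_real p * cinner v y) *\<^sub>C v) = \<bar>p\<bar> * cmod (cinner v y)"
    using assms by (simp add: norm_scaleC norm_mult)
  also have "\<dots> \<le> \<bar>p\<bar> * (norm v * norm y)" by (rule mult_left_mono[OF cinner_cs abs_ge_zero])
  also have "\<dots> = norm y * \<bar>p\<bar>" using assms by simp
  finally show ?thesis .
qed

lemma Dg_bound: "norm (Dg p q s y) \<le> norm y * (\<bar>p\<bar> + \<bar>q\<bar> + \<bar>s\<bar>)"
proof -
  have "norm (Dg p q s y) \<le> norm ((complex_of_real p * cinner f y) *\<^sub>C f) + norm ((complex_of_real q * cinner u1 y) *\<^sub>C u1)
     + norm ((complex_of_real s * cinner u2 y) *\<^sub>C u2)"
    unfolding Dg_expand by (rule order_trans[OF norm_triangle_ineq add_right_mono[OF norm_triangle_ineq]])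
  also have "\<dots> \<le> norm y * \<bar>p\<bar> + norm y * \<bar>q\<bar> + norm y * \<bar>s\<bar>"
    using norm_term[OF nf] norm_term[OF norm_u(1)] norm_term[OF norm_u(2)] by (intro add_mono) auto
  finally show ?thesis by (simp add: algebra_simps)
qed

definition Sres where "Sres \<mu> y = Dg (1 / (1 - \<mu>) + 1 / \<mu>) (1 / (r - \<mu>) + 1 / \<mu>) (1 / (- r - \<mu>) + 1 / \<mu>) y
   - complex_of_real (1 / \<mu>) *\<^sub>C y"

lemma Sres_bcl: "bounded_clinear (Sres \<mu>)"
proof -
  define p where "p = 1 / (1 - \<mu>) + 1 / \<mu>"
  define q where "q = 1 / (r - \<mu>) + 1 / \<mu>"
  define s where "s = 1 / (- r - \<mu>) + 1 / \<mu>"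
  have S: "Sres \<mu> y = Dg p q s y - complex_of_real (1 / \<mu>) *\<^sub>C y" for y by (simp add: Sres_def p_def q_def s_def)
  have "clinear (Sres \<mu>)" unfolding clinear_def S
    by (simp add: Dg_lin scaleC_add_right algebra_simps mult.commute)
  moreover have "norm (Sres \<mu> y) \<le> norm y * (\<bar>p\<bar> + \<bar>q\<bar> + \<bar>s\<bar> + \<bar>1/\<mu>\<bar>)" for y
  proof -
    have "norm (Sres \<mu> y) \<le> norm (Dg p q s y) + norm (complex_of_real (1 / \<mu>) *\<^sub>C y)"
      unfolding S by (rule norm_triangle_ineq4)
    also have "\<dots> \<le> norm y * (\<bar>p\<bar> + \<bar>q\<bar> + \<bar>s\<bar>) + norm y * \<bar>1/\<mu>\<bar>"
      using Dg_bound by (intro add_mono) (auto simp: norm_scaleC mult.commute norm_divide)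
    finally show ?thesis by (simp add: algebra_simps)
  qed
  ultimately show ?thesis unfolding bounded_clinear_def by blast
qed

lemma Sres_left:
  assumes "\<mu> \<noteq> 0" "\<mu> \<noteq> 1" "\<mu> \<noteq> r" "\<mu> \<noteq> - r"
  shows "Sres \<mu> (C x - complex_of_real \<mu> *\<^sub>C x) = x"
proof -
  define p where "p = 1 / (1 - \<mu>) + 1 / \<mu>"
  define q where "q = 1 / (r - \<mu>) + 1 / \<mu>"
  define s where "s = 1 / (- r - \<mu>) + 1 / \<mu>"
  have S: "Sres \<mu> y = Dg p q s y - complex_of_real (1 / \<mu>) *\<^sub>C y" for y by (simp add: Sres_def p_def q_def s_def)
  have m: "complex_of_real (1 / \<mu>) *\<^sub>C (complex_of_real \<mu> *\<^sub>C x) = x" using assms(1) by simp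
  have "Sres \<mu> (C x - complex_of_real \<mu> *\<^sub>C x)
      = (Dg p q s (Dg 1 r (- r) x) - complex_of_real \<mu> *\<^sub>C Dg p q s x)
        - (complex_of_real (1 / \<mu>) *\<^sub>C Dg 1 r (- r) x - x)"
    unfolding S C_Dg Dg_lin cvs.scale_right_diff_distrib m ..
  also have "\<dots> = (Dg (p * 1) (q * r) (s * - r) x - Dg (\<mu> * p) (\<mu> * q) (\<mu> * s) x)
        - (Dg (1 / \<mu> * 1) (1 / \<mu> * r) (1 / \<mu> * - r) x - x)"
    by (simp only: Dg_comp Dg_scale)
  also have "\<dots> = Dg (p * 1 - \<mu> * p - 1 / \<mu> * 1) (q * r - \<mu> * q - 1 / \<mu> * r) (s * - r - \<mu> * s - 1 / \<mu> * - r) x + x"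
    apply (subst grp) apply (simp only: Dg_diff) done
  also have "\<dots> = Dg 0 0 0 x + x"
    using coef_zero[OF assms(1), of 1] coef_zero[OF assms(1), of r] coef_zero[OF assms(1), of "-r"] assms
    by (simp add: p_def q_def s_def)
  finally show ?thesis by (simp add: Dg_000)
qed

lemma Sres_right:
  assumes "\<mu> \<noteq> 0" "\<mu> \<noteq> 1" "\<mu> \<noteq> r" "\<mu> \<noteq> - r"
  shows "C (Sres \<mu> y) - complex_of_real \<mu> *\<^sub>C Sres \<mu> y = y"
proof -
  define p where "p = 1 / (1 - \<mu>) + 1 / \<mu>"
  define q where "q = 1 / (r - \<mu>) + 1 / \<mu>"
  define s where "s = 1 / (- r - \<mu>) + 1 / \<mu>"
  have S: "Sres \<mu> y = Dg p q s y - complex_of_real (1 / \<mu>) *\<^sub>C y" for y by (simp add: Sres_def p_def q_def s_def)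
  have m: "complex_of_real \<mu> *\<^sub>C (complex_of_real (1 / \<mu>) *\<^sub>C y) = y" using assms(1) by simp
  have "C (Sres \<mu> y) - complex_of_real \<mu> *\<^sub>C Sres \<mu> y
      = (Dg 1 r (- r) (Dg p q s y) - complex_of_real (1 / \<mu>) *\<^sub>C Dg 1 r (- r) y)
        - (complex_of_real \<mu> *\<^sub>C Dg p q s y - y)"
    unfolding S C_Dg Dg_lin cvs.scale_right_diff_distrib m ..
  also have "\<dots> = (Dg (1 * p) (r * q) (- r * s) y - Dg (1 / \<mu> * 1) (1 / \<mu> * r) (1 / \<mu> * - r) y)
        - (Dg (\<mu> * p) (\<mu> * q) (\<mu> * s) y - y)"
    by (simp only: Dg_comp Dg_scale)
  also have "\<dots> = Dg (1 * p - 1 / \<mu> * 1 - \<mu> * p) (r * q - 1 / \<mu> * r - \<mu> * q) (- r * s - 1 / \<mu> * - r - \<mu> * s) y + y"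
    apply (subst grp) apply (simp only: Dg_diff) done
  also have "\<dots> = Dg 0 0 0 y + y"
    using coef_zero2[OF assms(1), of 1, folded p_def] coef_zero2[OF assms(1), of r, folded q_def]
      coef_zero2[OF assms(1), of "-r", folded s_def] assms
    by simp
  finally show ?thesis by (simp add: Dg_000)
qed

lemma spectrum_C: "op_spectrum C \<inter> complex_of_real ` {0<..<1} = {complex_of_real r}"
proof
  show "{complex_of_real r} \<subseteq> op_spectrum C \<inter> complex_of_real ` {0<..<1}"
  proof -
    have "complex_of_real r \<in> op_spectrum C"
      unfolding op_spectrum_def
    proof (clarify)
      fix S assume S: "bounded_clinear S" "\<forall>x. S (C x - complex_of_real r *\<^sub>C x) = x"
      have S0: "S 0 = 0" using S(1) unfolding bounded_clinear_def clinear_def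
        by (metis add_cancel_right_right)
      have z: "C u1 - complex_of_real r *\<^sub>C u1 = 0" by (simp add: Cu)
      have "u1 = S (C u1 - complex_of_real r *\<^sub>C u1)" using S(2) by simp
      also have "\<dots> = 0" by (simp only: z S0)
      finally have "u1 = 0" .
      then show False using uinner(1) by simp
    qed
    moreover have "r \<in> {0<..<1}" using r_pos r_lt1 by simp
    ultimately show ?thesis by auto
  qed
next
  show "op_spectrum C \<inter> complex_of_real ` {0<..<1} \<subseteq> {complex_of_real r}"
  proof
    fix z assume z: "z \<in> op_spectrum C \<inter> complex_of_real ` {0<..<1}"
    then obtain \<mu> where \<mu>: "z = complex_of_real \<mu>" "0 < \<mu>" "\<mu> < 1" by auto
    show "z \<in> {complex_of_real r}"
    proof (rule ccontr)
      assume "z \<notin> {complex_of_real r}"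
      then have ne: "\<mu> \<noteq> r" using \<mu> by auto
      have a: "\<mu> \<noteq> 0" "\<mu> \<noteq> 1" "\<mu> \<noteq> - r" using \<mu> r_pos by auto
      have "\<exists>S. bounded_clinear S \<and> (\<forall>x. S (C x - z *\<^sub>C x) = x) \<and> (\<forall>y. C (S y) - z *\<^sub>C S y = y)"
        using Sres_bcl Sres_left[OF a(1,2) ne a(3)] Sres_right[OF a(1,2) ne a(3)] \<mu>(1) by blast
      moreover have "z \<in> op_spectrum C" using z by blast
      then have "\<not> (\<exists>S. bounded_clinear S \<and> (\<forall>x. S (C x - z *\<^sub>C x) = x) \<and> (\<forall>y. C (S y) - z *\<^sub>C S y = y))"
        unfolding op_spectrum_def by (rule CollectD)
      ultimately show False by (rule notE[rotated])
    qed
  qed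
qed

end


context gpair_gen begin

abbreviation "K \<equiv> orth_compl (op_kernel C)"

lemma ker_inner: assumes "C z = 0" shows "cinner f z = 0" "cinner u1 z = 0" "cinner u2 z = 0"
proof -
  have "cinner f (C z) = cinner f z" by (simp add: C_Dg Dg_inner)
  then show "cinner f z = 0" using assms by simp
  have "cinner u1 (C z) = complex_of_real r * cinner u1 z" by (simp add: C_Dg Dg_inner)
  then show "cinner u1 z = 0" using assms r_pos by simp
  have "cinner u2 (C z) = complex_of_real (- r) * cinner u2 z" by (simp add: C_Dg Dg_inner)
  then show "cinner u2 z = 0" using assms r_pos by simp
qed

lemma K_char: "x \<in> K \<longleftrightarrow> Dg 1 1 1 x = x"
proof
  assume xK: "x \<in> K"
  define y where "y = x - Dg 1 1 1 x"
  have "C y = Dg 1 r (- r) x - Dg (1 * 1) (r * 1) (- r * 1) x"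
    by (simp only: y_def C_Dg Dg_lin Dg_comp)
  then have "C y = 0" by simp
  then have "y \<in> op_kernel C" by (simp add: op_kernel_def)
  then have yx: "cinner y x = 0" using xK by (simp add: orth_compl_def)
  have "Dg 1 1 1 y = Dg 1 1 1 x - Dg (1 * 1) (1 * 1) (1 * 1) x" by (simp only: y_def Dg_lin Dg_comp)
  then have Py: "Dg 1 1 1 y = 0" by simp
  have "cinner y (Dg 1 1 1 x) = 0" by (simp add: Dg_adj[symmetric] Py)
  then have "cinner y y = 0" using yx by (simp add: y_def cinner_diff_right)
  then show "Dg 1 1 1 x = x" by (simp add: cinner_eq_zero_iff y_def)
next
  assume Px: "Dg 1 1 1 x = x"
  show "x \<in> K" unfolding orth_compl_def op_kernel_def
  proof (clarify)
    fix z assume Cz: "C z = 0"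
    have "Dg 1 1 1 z = 0" by (simp add: Dg_expand ker_inner[OF Cz])
    then have "cinner (Dg 1 1 1 z) x = 0" by simp
    then show "cinner z x = 0" by (simp add: Dg_adj Px)
  qed
qed

definition Uv :: "'a \<Rightarrow> complex^3" where
  "Uv x = (\<chi> i. if i = 1 then cinner f x else if i = 2 then cinner u1 x else cinner u2 x)"

lemma Uv_comp: "Uv x $ 1 = cinner f x" "Uv x $ 2 = cinner u1 x" "Uv x $ 3 = cinner u2 x"
  by (simp_all add: Uv_def)

lemma unit_equiv: "unitarily_equiv_restr C K (diag3 1 (complex_of_real r) (- complex_of_real r))"
  unfolding unitarily_equiv_restr_def
proof (intro conjI exI[of _ Uv])
  show "C ` K \<subseteq> K"
  proof
    fix y assume "y \<in> C ` K"
    then obtain x where y: "y = C x" by blast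
    have "Dg 1 1 1 (C x) = Dg (1 * 1) (1 * r) (1 * - r) x" by (simp only: C_Dg Dg_comp)
    then have "Dg 1 1 1 (C x) = C x" by (simp add: C_Dg)
    then show "y \<in> K" using y K_char by simp
  qed
  show "\<forall>x\<in>K. \<forall>y\<in>K. \<forall>a. Uv (a *\<^sub>C x + y) = a *s Uv x + Uv y"
    by (simp add: vec_eq_iff forall_3 Uv_comp cinner_add_right cinner_scaleC_right)
  show "\<forall>x\<in>K. \<forall>y\<in>K. cinner3 (Uv x) (Uv y) = cinner x y"
  proof (intro ballI)
    fix x y assume x: "x \<in> K" and "y \<in> K"
    have "cinner x y = cinner (Dg 1 1 1 x) y" using x K_char by simp
    also have "\<dots> = cnj (cinner f x) * cinner f y + cnj (cinner u1 x) * cinner u1 y + cnj (cinner u2 x) * cinner u2 y"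
      by (simp add: Dg_expand cinner_add_left cinner_scaleC_left)
    finally show "cinner3 (Uv x) (Uv y) = cinner x y"
      by (simp add: cinner3_def sum_3 Uv_comp)
  qed
  show "Uv ` K = UNIV"
  proof (rule set_eqI, rule iffI)
    fix v :: "complex^3"
    define x where "x = (v $ 1) *\<^sub>C f + (v $ 2) *\<^sub>C u1 + (v $ 3) *\<^sub>C u2"
    have i: "cinner f x = v $ 1" "cinner u1 x = v $ 2" "cinner u2 x = v $ 3"
      by (simp_all add: x_def cinner_add_right cinner_scaleC_right ff uinner)
    have "Dg 1 1 1 x = x" by (simp only: Dg_expand i) (simp add: x_def)
    then have "x \<in> K" using K_char by simp
    moreover have "Uv x = v" by (simp add: vec_eq_iff forall_3 Uv_comp i)
    ultimately show "v \<in> Uv ` K" by blast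
  qed simp
  show "\<forall>x\<in>K. Uv (C x) = diag3 1 (complex_of_real r) (- complex_of_real r) *v Uv x"
    by (simp add: vec_eq_iff forall_3 Uv_comp matrix_vector_mult_def sum_3 diag3_def C_Dg Dg_inner)
qed

lemma Esp1: "E_sp V1 V2 1 = range (\<lambda>c. c *\<^sub>C f)"
proof
  show "E_sp V1 V2 1 \<subseteq> range (\<lambda>c. c *\<^sub>C f)"
    using E1_eq by (auto simp: E_sp_def eigsp_def)
  show "range (\<lambda>c. c *\<^sub>C f) \<subseteq> E_sp V1 V2 1"
    by (auto simp: E_sp_def eigsp_def C_lin C_f)
qed

lemma Espm1: "E_sp V1 V2 (-1) = {0}"
  using Em1 by (auto simp: E_sp_def eigsp_def C_lin)

lemma beta_ne: "\<beta> \<noteq> 0" using rpos by auto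

lemma range_X: "range X = E_sp V1 V2 1"
proof
  show "range X \<subseteq> E_sp V1 V2 1" using CX by (auto simp: E_sp_def eigsp_def)
  show "E_sp V1 V2 1 \<subseteq> range X"
  proof
    fix y assume "y \<in> E_sp V1 V2 1"
    then obtain c where y: "y = c *\<^sub>C f" using Esp1 by auto
    have "X ((c / \<beta>) *\<^sub>C f) = y" using beta_ne by (simp add: X_lin Xf y)
    then show "y \<in> range X" by (metis rangeI)
  qed
qed

lemma rank_X: "op_rank X = 1"
proof -
  have "range X = cvs.span {f}" using range_X Esp1 by (simp add: cvs.span_singleton)
  then have "op_rank X = cvs.dim {f}" by (simp add: op_rank_def)
  also have "\<dots> = 1" using nf by (subst cvs.dim_eq_card_independent) auto
  finally show ?thesis .
qed

lemma beta_unique: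
  assumes "f' \<in> E_sp V1 V2 1" "norm f' = 1" "X f' = \<beta>' *\<^sub>C f'"
  shows "\<beta>' = \<beta>"
proof -
  obtain c where c: "f' = c *\<^sub>C f" using assms(1) Esp1 by auto
  have "X f' = \<beta> *\<^sub>C f'" by (simp add: c X_lin Xf mult.commute)
  then have "(\<beta>' - \<beta>) *\<^sub>C f' = 0" using assms(3) by (simp add: cvs.scale_left_diff_distrib)
  then have "cmod (\<beta>' - \<beta>) * norm f' = 0" by (metis norm_scaleC norm_zero)
  then show ?thesis using assms(2) by simp
qed

end


lemma cross_adj:
  fixes V1 V2 :: "'a::chilbert \<Rightarrow> 'a"
  assumes "isometry V1" "isometry V2"
  shows "cinner (cross_comm V1 V2 x) y = cinner x (adj V1 (V2 y) - V2 (adj V1 y))"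
  by (simp add: cross_comm_def cinner_diff_left cinner_diff_right adj_iso[OF assms(1)] adj_iso[OF assms(2)]
      adj_iso'[OF assms(1), symmetric] adj_iso'[OF assms(2), symmetric])

lemma dim_zero_range: "range T = {0} \<Longrightarrow> cvs.dim (range (T::'a::complex_inner \<Rightarrow> 'a)) = 0"
  using cvs.dim_le_card[of "{0::'a}" "{}"] by simp

theorem theorem4p9:
  fixes V1 V2 :: "'a::chilbert \<Rightarrow> 'a"
  assumes "separable_space TYPE('a)"
    and "three_finite_pair V1 V2"
    and "irreducible_pair V1 V2"
  shows "(op_rank (cross_comm V1 V2) = 1 \<and> range (cross_comm V1 V2) = E_sp V1 V2 1)
    \<and> E_sp V1 V2 (-1) = {0}
    \<and> (\<exists>!\<beta>::complex. \<beta> \<noteq> 0 \<and> (\<exists>f. f \<in> E_sp V1 V2 1 \<and> norm f = 1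
           \<and> E_sp V1 V2 1 = range (\<lambda>c. c *\<^sub>C f) \<and> cross_comm V1 V2 f = \<beta> *\<^sub>C f))
    \<and> (\<exists>!lam::real. 0 < lam \<and> lam < 1
           \<and> op_spectrum (defect_op V1 V2) \<inter> complex_of_real ` {0<..<1} = {complex_of_real lam}
           \<and> unitarily_equiv_restr (defect_op V1 V2) (orth_compl (op_kernel (defect_op V1 V2)))
                (diag3 1 (complex_of_real lam) (- complex_of_real lam)))
    \<and> (\<forall>(\<beta>::complex) (lam::real).
           (\<beta> \<noteq> 0 \<and> (\<exists>f. f \<in> E_sp V1 V2 1 \<and> norm f = 1
              \<and> E_sp V1 V2 1 = range (\<lambda>c. c *\<^sub>C f) \<and> cross_comm V1 V2 f = \<beta> *\<^sub>C f))
         \<longrightarrow> (0 < lam \<and> lam < 1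
           \<and> op_spectrum (defect_op V1 V2) \<inter> complex_of_real ` {0<..<1} = {complex_of_real lam}
           \<and> unitarily_equiv_restr (defect_op V1 V2) (orth_compl (op_kernel (defect_op V1 V2)))
                (diag3 1 (complex_of_real lam) (- complex_of_real lam)))
         \<longrightarrow> cmod \<beta> = lam)"
proof -
  have tf: "compact_normal_pair V1 V2" "op_rank (defect_op V1 V2) = 3"
    using assms(2) by (simp_all add: three_finite_pair_def)
  then have bcl: "BCL_pair V1 V2" and nX: "normal_op (cross_comm V1 V2)"
    by (simp_all add: compact_normal_pair_def)
  then have iso1: "isometry V1" and iso2: "isometry V2" and cm: "V1 \<circ> V2 = V2 \<circ> V1"
    by (simp_all add: BCL_pair_def isometric_pair_def)
  have adjX: "adj (cross_comm V1 V2) = (\<lambda>y. adj V1 (V2 y) - V2 (adj V1 y))"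
    by (rule adj_unique) (rule cross_adj[OF iso1 iso2])
  interpret ipair V1 V2
  proof
    show "V1 (V2 x) = V2 (V1 x)" for x using fun_cong[OF cm, of x] by simp
    show "cross_comm V1 V2 (adj V1 (V2 x) - V2 (adj V1 x))
        = adj V1 (V2 (cross_comm V1 V2 x)) - V2 (adj V1 (cross_comm V1 V2 x))" for x
    proof -
      have nn: "cross_comm V1 V2 \<circ> (\<lambda>y. adj V1 (V2 y) - V2 (adj V1 y))
          = (\<lambda>y. adj V1 (V2 y) - V2 (adj V1 y)) \<circ> cross_comm V1 V2"
        using nX unfolding normal_op_def adjX by (rule conjunct2)
      show ?thesis using fun_cong[OF nn, of x] by simp
    qed
  qed (use iso1 iso2 in auto)
  define E where "E = {x. C x = x}"
  have Esub: "cvs.subspace E" unfolding E_def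
    by (rule cvs.subspaceI) (simp_all add: C_lin)
  have XE: "X y \<in> E" for y by (simp add: E_def CX)
  obtain B where B: "B \<subseteq> range C" "cvs.independent B" "range C \<subseteq> cvs.span B" "card B = cvs.dim (range C)"
    using cvs.basis_exists by blast
  have finB: "finite B" using B(4) tf(2) by (metis op_rank_def card.infinite zero_neq_numeral)
  have EB: "E \<subseteq> cvs.span B" using B(3) by (auto simp: E_def) (metis rangeI subsetD)
  have "\<exists>g. g \<in> E \<and> g \<noteq> 0"
  proof (rule ccontr)
    assume "\<not> (\<exists>g. g \<in> E \<and> g \<noteq> 0)"
    then have E0: "\<And>g. g \<in> E \<Longrightarrow> g = 0" by blast
    have X0: "X y = 0" for y using E0[OF XE] .
    have Xd0: "Xd y = 0" for y using normX[of y] X0 by simp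
    have "C y \<in> E" for y
    proof -
      have "A1 (C y) = 0" "A2 (C y) = 0" by (simp_all add: A1C A2C X0 Xd0)
      then show ?thesis by (simp add: E_def E1_char)
    qed
    then have "range C = {0}" using E0 by auto
    then have "op_rank C = 0" unfolding op_rank_def by (rule dim_zero_range)
    then show False using tf(2) by simp
  qed
  then obtain g where g: "g \<in> E" "g \<noteq> 0" by blast
  interpret Xop: clin_op X by (rule X_clin)
  obtain f0 \<beta> where f0: "f0 \<in> E" "f0 \<noteq> 0" "X f0 = \<beta> *\<^sub>C f0"
    using Xop.eig_exists[OF Esub _ EB finB g] XE by blast
  define f where "f = complex_of_real (1 / norm f0) *\<^sub>C f0"
  have fE: "f \<in> E" unfolding f_def by (rule cvs.subspace_scale[OF Esub f0(1)])
  have nf: "norm f = 1" using f0(2) by (simp add: f_def norm_scaleC norm_divide)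
  have Xf: "X f = \<beta> *\<^sub>C f" by (simp add: f_def X_lin f0(3) mult.commute)
  have Af: "A1 f = 0" "A2 f = 0" using fE E1_char by (auto simp: E_def)
  interpret gpair V1 V2 f \<beta>
    by unfold_locales (use Af nf Xf assms(3) in auto)
  have b0: "\<beta> \<noteq> 0" using rank_beta0 tf(2) by auto
  have b1: "cmod \<beta> \<noteq> 1" using rank_beta1 tf(2) by auto
  interpret gpair_gen V1 V2 f \<beta>
    by unfold_locales (use b0 b1 beta_le1 in auto)
  have P3: "\<beta> \<noteq> 0 \<and> (\<exists>f. f \<in> E_sp V1 V2 1 \<and> norm f = 1
           \<and> E_sp V1 V2 1 = range (\<lambda>c. c *\<^sub>C f) \<and> cross_comm V1 V2 f = \<beta> *\<^sub>C f)"
  proof -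
    have fin: "f \<in> E_sp V1 V2 1" unfolding Esp1 by (rule range_eqI[of _ _ 1]) simp
    show ?thesis using b0 nf Xf Esp1 fin by blast
  qed
  have U3: "\<beta>' = \<beta>" if "\<beta>' \<noteq> 0 \<and> (\<exists>f. f \<in> E_sp V1 V2 1 \<and> norm f = 1
           \<and> E_sp V1 V2 1 = range (\<lambda>c. c *\<^sub>C f) \<and> cross_comm V1 V2 f = \<beta>' *\<^sub>C f)" for \<beta>'
    using that beta_unique by blast
  have P4: "0 < r \<and> r < 1
           \<and> op_spectrum (defect_op V1 V2) \<inter> complex_of_real ` {0<..<1} = {complex_of_real r}
           \<and> unitarily_equiv_restr (defect_op V1 V2) (orth_compl (op_kernel (defect_op V1 V2)))
                (diag3 1 (complex_of_real r) (- complex_of_real r))"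
    using r_pos r_lt1 spectrum_C unit_equiv by blast
  have U4: "lam = r" if "op_spectrum (defect_op V1 V2) \<inter> complex_of_real ` {0<..<1} = {complex_of_real lam}" for lam
    using that spectrum_C by simp
  show ?thesis
  proof (intro conjI)
    show "op_rank (cross_comm V1 V2) = 1" by (rule rank_X)
    show "range (cross_comm V1 V2) = E_sp V1 V2 1" by (rule range_X)
    show "E_sp V1 V2 (-1) = {0}" by (rule Espm1)
    show "\<exists>!\<beta>::complex. \<beta> \<noteq> 0 \<and> (\<exists>f. f \<in> E_sp V1 V2 1 \<and> norm f = 1
           \<and> E_sp V1 V2 1 = range (\<lambda>c. c *\<^sub>C f) \<and> cross_comm V1 V2 f = \<beta> *\<^sub>C f)"
      using P3 U3 by blast
    show "\<exists>!lam::real. 0 < lam \<and> lam < 1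
           \<and> op_spectrum (defect_op V1 V2) \<inter> complex_of_real ` {0<..<1} = {complex_of_real lam}
           \<and> unitarily_equiv_restr (defect_op V1 V2) (orth_compl (op_kernel (defect_op V1 V2)))
                (diag3 1 (complex_of_real lam) (- complex_of_real lam))"
      using P4 U4 by blast
    show "\<forall>(\<beta>'::complex) (lam::real).
           (\<beta>' \<noteq> 0 \<and> (\<exists>f. f \<in> E_sp V1 V2 1 \<and> norm f = 1
              \<and> E_sp V1 V2 1 = range (\<lambda>c. c *\<^sub>C f) \<and> cross_comm V1 V2 f = \<beta>' *\<^sub>C f))
         \<longrightarrow> (0 < lam \<and> lam < 1
           \<and> op_spectrum (defect_op V1 V2) \<inter> complex_of_real ` {0<..<1} = {complex_of_real lam}
           \<and> unitarily_equiv_restr (defect_op V1 V2) (orth_compl (op_kernel (defect_op V1 V2)))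
                (diag3 1 (complex_of_real lam) (- complex_of_real lam)))
         \<longrightarrow> cmod \<beta>' = lam"
    proof (intro allI impI)
      fix \<beta>' lam
      assume h1: "\<beta>' \<noteq> 0 \<and> (\<exists>f. f \<in> E_sp V1 V2 1 \<and> norm f = 1
              \<and> E_sp V1 V2 1 = range (\<lambda>c. c *\<^sub>C f) \<and> cross_comm V1 V2 f = \<beta>' *\<^sub>C f)"
      assume h2: "0 < lam \<and> lam < 1
           \<and> op_spectrum (defect_op V1 V2) \<inter> complex_of_real ` {0<..<1} = {complex_of_real lam}
           \<and> unitarily_equiv_restr (defect_op V1 V2) (orth_compl (op_kernel (defect_op V1 V2)))
                (diag3 1 (complex_of_real lam) (- complex_of_real lam))"
      have "\<beta>' = \<beta>" using U3 h1 by blast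
      moreover have "lam = r" using U4 h2 by blast
      ultimately show "cmod \<beta>' = lam" by (simp add: r_def)
    qed
  qed
qed


end
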